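(* Let $A$ be a $B$-algebra with a $B$-linear double bracket, $B=\bigoplus_{s\in I}\Bbbk e_s$, and let $e_1,e_2$ be two distinct idempotents of the family. Let $A_1=A^f_{e_2\to e_1}$ and $A_2=A^f_{e_1\to e_2}$ with their induced double brackets, and let $\pi_k:A\to A_k$ ($k=1,2$) be the maps $a\mapsto a^f$. Then there exists an isomorphism of algebras $\phi:A_1\to A_2$ with $\phi\circ\pi_1=\pi_2$ which is an isomorphism of double brackets, i.e. $\{\!\{\phi(a),\phi(b)\}\!\}_{A_2}=(\phi\otimes\phi)\{\!\{a,b\}\!\}_{A_1}$ for all $a,b\in A_1$.
   Context: $\Bbbk$ field of characteristic $0$; algebras associative, unital, finitely generated; $B=\bigoplus_{s\in I}\Bbbk e_s$ with orthogonal idempotents summing to $1$. Sweedler notation $d=d'\otimes d''$, $(d'\otimes d'')^\circ=d''\otimes d'$, outer bimodule $a(d'\otimes d'')b=ad'\otimes d''b$. A $B$-linear double bracket: bilinear $\{\!\{-,-\}\!\}:A\times A\to A\otimes A$ with $\{\!\{a,b\}\!\}=-\{\!\{b,a\}\!\}^\circ$, $\{\!\{a,bc\}\!\}=\{\!\{a,b\}\!\}c+b\{\!\{a,c\}\!\}$, zero if an argument lies in $B$. Fusion of $e_j$ onto $e_i$ ($i\ne j$): $\hat e=1-e_i-e_j$, $\bar A=A*_{\Bbbk e_i\oplus\Bbbk e_j\oplus\Bbbk\hat e}(\mathrm{Mat}_2(\Bbbk)\oplus\Bbbk\hat e)$ where $\mathrm{Mat}_2(\Bbbk)$ has matrix units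 $e_{ii}=e_i,e_{ij},e_{ji},e_{jj}=e_j$; $A^f_{e_j\to e_i}=\epsilon\bar A\epsilon$ with $\epsilon=1-e_j$, an algebra over $\bigoplus_{s\ne j}\Bbbk e_s$; $a^f=\epsilon a\epsilon+e_{ij}ae_{ji}+e_{ij}a\epsilon+\epsilon ae_{ji}$. $A^f$ is generated by elements $e_aaf_a$ with $a\in A$, $e_a\in\{\epsilon,e_{ij}\}$, $f_a\in\{\epsilon,e_{ji}\}$ of the forms $t$ ($t\in\epsilon A\epsilon$), $e_{ij}u$ ($u\in e_jA\epsilon$), $ve_{ji}$ ($v\in\epsilon Ae_j$), $e_{ij}we_{ji}$ ($w\in e_jAe_j$); the induced double bracket on $A^f$ is determined by $\{\!\{e_aaf_a,e_bbf_b\}\!\}=e_b\{\!\{a,b\}\!\}'f_a\otimes e_a\{\!\{a,b\}\!\}''f_b$. *)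

theory Defs
  imports Main "HOL-Library.Poly_Mapping"
begin

record ('k, 'a) kalg =
  car  :: "'a set"
  add  :: "'a \<Rightarrow> 'a \<Rightarrow> 'a"
  neg  :: "'a \<Rightarrow> 'a"
  zer  :: 'a
  mul  :: "'a \<Rightarrow> 'a \<Rightarrow> 'a"
  one  :: 'a
  smul :: "'k \<Rightarrow> 'a \<Rightarrow> 'a"

definition sub :: "('k, 'a) kalg \<Rightarrow> 'a \<Rightarrow> 'a \<Rightarrow> 'a" where
  "sub K x y = add K x (neg K y)"

definition is_kalg :: "('k::field, 'a) kalg \<Rightarrow> bool" where
  "is_kalg K \<longleftrightarrow>
    zer K \<in> car K \<and> one K \<in> car K \<and>
    (\<forall>x\<in>car K. \<forall>y\<in>car K. add K x y \<in> car K \<and> mul K x y \<in> car K) \<and>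
    (\<forall>x\<in>car K. neg K x \<in> car K) \<and>
    (\<forall>c. \<forall>x\<in>car K. smul K c x \<in> car K) \<and>
    (\<forall>x\<in>car K. \<forall>y\<in>car K. \<forall>z\<in>car K.
        add K (add K x y) z = add K x (add K y z) \<and>
        mul K (mul K x y) z = mul K x (mul K y z) \<and>
        mul K x (add K y z) = add K (mul K x y) (mul K x z) \<and>
        mul K (add K x y) z = add K (mul K x z) (mul K y z)) \<and>
    (\<forall>x\<in>car K. \<forall>y\<in>car K. add K x y = add K y x) \<and>
    (\<forall>x\<in>car K. add K x (zer K) = x \<and> add K x (neg K x) = zer K \<and>
                 mul K (one K) x = x \<and> mul K x (one K) = x) \<and>
    (\<forall>c d. \<forall>x\<in>car K. \<forall>y\<in>car K.
        smul K c (add K x y) = add K (smul K c x) (smul K c y) \<and>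
        smul K (c + d) x = add K (smul K c x) (smul K d x) \<and>
        smul K (c * d) x = smul K c (smul K d x) \<and>
        smul K 1 x = x \<and>
        mul K (smul K c x) y = smul K c (mul K x y) \<and>
        mul K x (smul K c y) = smul K c (mul K x y))"

inductive_set gen_subalg :: "('k, 'a) kalg \<Rightarrow> 'a set \<Rightarrow> 'a set" for K G where
  gen: "x \<in> G \<Longrightarrow> x \<in> gen_subalg K G"
| one: "one K \<in> gen_subalg K G"
| add: "x \<in> gen_subalg K G \<Longrightarrow> y \<in> gen_subalg K G \<Longrightarrow> add K x y \<in> gen_subalg K G"
| mul: "x \<in> gen_subalg K G \<Longrightarrow> y \<in> gen_subalg K G \<Longrightarrow> mul K x y \<in> gen_subalg K G"
| smul: "x \<in> gen_subalg K G \<Longrightarrow> smul K c x \<in> gen_subalg K G"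

definition fin_gen :: "('k, 'a) kalg \<Rightarrow> bool" where
  "fin_gen K \<longleftrightarrow> (\<exists>G. finite G \<and> G \<subseteq> car K \<and> gen_subalg K G = car K)"

definition lincomb :: "('k, 'a) kalg \<Rightarrow> ('i \<Rightarrow> 'a) \<Rightarrow> ('i \<Rightarrow> 'k) \<Rightarrow> 'i list \<Rightarrow> 'a" where
  "lincomb K e c I = foldr (\<lambda>s acc. add K (smul K (c s) (e s)) acc) I (zer K)"

definition kspan :: "('k, 'a) kalg \<Rightarrow> ('i \<Rightarrow> 'a) \<Rightarrow> 'i list \<Rightarrow> 'a set" where
  "kspan K e I = {lincomb K e c I | c. True}"

text \<open>K is a B-algebra for B = direct sum of k e_s (s in I), with e_s orthogonal
  idempotents summing to 1 (the index set is the finite set of the distinct list I).\<close>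
definition B_algebra :: "('k::field, 'a) kalg \<Rightarrow> ('i \<Rightarrow> 'a) \<Rightarrow> 'i list \<Rightarrow> bool" where
  "B_algebra K e I \<longleftrightarrow> is_kalg K \<and> distinct I \<and> (\<forall>s\<in>set I. e s \<in> car K) \<and>
     (\<forall>s\<in>set I. \<forall>t\<in>set I. mul K (e s) (e t) = (if s = t then e s else zer K)) \<and>
     lincomb K e (\<lambda>_. 1) I = one K \<and>
     (\<forall>c. lincomb K e c I = zer K \<longrightarrow> (\<forall>s\<in>set I. c s = 0))"

text \<open>A tensor is represented by a finite list of pairs [(x1,y1),...] meaning
  the sum of the xi \<otimes> yi; tens_eq is the congruence whose quotient is K \<otimes>_k K.\<close>
inductive tens_eq :: "('k, 'a) kalg \<Rightarrow> ('a \<times> 'a) list \<Rightarrow> ('a \<times> 'a) list \<Rightarrow> bool" for K where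
  refl: "tens_eq K t t"
| sym: "tens_eq K t u \<Longrightarrow> tens_eq K u t"
| trans: "tens_eq K t u \<Longrightarrow> tens_eq K u v \<Longrightarrow> tens_eq K t v"
| app: "tens_eq K t t' \<Longrightarrow> tens_eq K u u' \<Longrightarrow> tens_eq K (t @ u) (t' @ u')"
| swap: "tens_eq K (t @ u) (u @ t)"
| addl: "x \<in> car K \<Longrightarrow> x' \<in> car K \<Longrightarrow> y \<in> car K \<Longrightarrow>
          tens_eq K [(add K x x', y)] [(x, y), (x', y)]"
| addr: "x \<in> car K \<Longrightarrow> y \<in> car K \<Longrightarrow> y' \<in> car K \<Longrightarrow>
          tens_eq K [(x, add K y y')] [(x, y), (x, y')]"
| scal: "x \<in> car K \<Longrightarrow> y \<in> car K \<Longrightarrow> tens_eq K [(smul K c x, y)] [(x, smul K c y)]"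
| zero: "y \<in> car K \<Longrightarrow> tens_eq K [] [(zer K, y)]"

definition tlmul :: "('k, 'a) kalg \<Rightarrow> 'a \<Rightarrow> ('a \<times> 'a) list \<Rightarrow> ('a \<times> 'a) list" where
  "tlmul K a t = map (\<lambda>(p, q). (mul K a p, q)) t"

definition trmul :: "('k, 'a) kalg \<Rightarrow> ('a \<times> 'a) list \<Rightarrow> 'a \<Rightarrow> ('a \<times> 'a) list" where
  "trmul K t b = map (\<lambda>(p, q). (p, mul K q b)) t"

definition tswap :: "('a \<times> 'a) list \<Rightarrow> ('a \<times> 'a) list" where
  "tswap t = map (\<lambda>(p, q). (q, p)) t"

definition tneg :: "('k, 'a) kalg \<Rightarrow> ('a \<times> 'a) list \<Rightarrow> ('a \<times> 'a) list" where
  "tneg K t = map (\<lambda>(p, q). (neg K p, q)) t"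

definition tscal :: "('k, 'a) kalg \<Rightarrow> 'k \<Rightarrow> ('a \<times> 'a) list \<Rightarrow> ('a \<times> 'a) list" where
  "tscal K c t = map (\<lambda>(p, q). (smul K c p, q)) t"

definition tmap :: "('a \<Rightarrow> 'b) \<Rightarrow> ('a \<times> 'a) list \<Rightarrow> ('b \<times> 'b) list" where
  "tmap f t = map (\<lambda>(p, q). (f p, f q)) t"

definition dbl_bracket ::
  "('k::field, 'a) kalg \<Rightarrow> ('i \<Rightarrow> 'a) \<Rightarrow> 'i list \<Rightarrow> ('a \<Rightarrow> 'a \<Rightarrow> ('a \<times> 'a) list) \<Rightarrow> bool" where
  "dbl_bracket K e I br \<longleftrightarrow>
    (\<forall>x\<in>car K. \<forall>y\<in>car K. set (br x y) \<subseteq> car K \<times> car K) \<and>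
    (\<forall>x\<in>car K. \<forall>y\<in>car K. \<forall>z\<in>car K.
        tens_eq K (br (add K x y) z) (br x z @ br y z) \<and>
        tens_eq K (br x (add K y z)) (br x y @ br x z)) \<and>
    (\<forall>c. \<forall>x\<in>car K. \<forall>y\<in>car K.
        tens_eq K (br (smul K c x) y) (tscal K c (br x y)) \<and>
        tens_eq K (br x (smul K c y)) (tscal K c (br x y))) \<and>
    (\<forall>x\<in>car K. \<forall>y\<in>car K. tens_eq K (br x y) (tneg K (tswap (br y x)))) \<and>
    (\<forall>x\<in>car K. \<forall>y\<in>car K. \<forall>z\<in>car K.
        tens_eq K (br x (mul K y z)) (trmul K (br x y) z @ tlmul K y (br x z))) \<and>
    (\<forall>b\<in>kspan K e I. \<forall>x\<in>car K. tens_eq K (br b x) [] \<and> tens_eq K (br x b) [])"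

text \<open>Free k-algebra on generators 'g: k-linear combinations of words.\<close>
type_synonym ('g, 'k) free = "'g list \<Rightarrow>\<^sub>0 'k"

definition fmul :: "('g, 'k::field) free \<Rightarrow> ('g, 'k) free \<Rightarrow> ('g, 'k) free" where
  "fmul p q = (\<Sum>u\<in>Poly_Mapping.keys p. \<Sum>v\<in>Poly_Mapping.keys q. Poly_Mapping.single (u @ v) (Poly_Mapping.lookup p u * Poly_Mapping.lookup q v))"

definition fone :: "('g, 'k::field) free" where
  "fone = Poly_Mapping.single [] 1"

definition fscal :: "'k::field \<Rightarrow> ('g, 'k) free \<Rightarrow> ('g, 'k) free" where
  "fscal c p = fmul (Poly_Mapping.single [] c) p"

definition fgen :: "'g \<Rightarrow> ('g, 'k::field) free" where
  "fgen g = Poly_Mapping.single [g] 1"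

text \<open>Generators of the amalgamated free product: elements of A (Inl) and
  matrix units e_pq (Inr (p,q)), p,q \<in> {i,j}.\<close>
type_synonym ('a, 'i, 'k) fbar = "('a + 'i \<times> 'i, 'k) free"

definition fus_rels :: "('k::field, 'a) kalg \<Rightarrow> ('i \<Rightarrow> 'a) \<Rightarrow> 'i \<Rightarrow> 'i \<Rightarrow> ('a, 'i, 'k) fbar set" where
  "fus_rels A e i j =
     {fgen (Inl (one A)) - fone} \<union>
     {fgen (Inl (add A a b)) - (fgen (Inl a) + fgen (Inl b)) | a b. a \<in> car A \<and> b \<in> car A} \<union>
     {fgen (Inl (smul A c a)) - fscal c (fgen (Inl a)) | c a. a \<in> car A} \<union>
     {fgen (Inl (mul A a b)) - fmul (fgen (Inl a)) (fgen (Inl b)) | a b. a \<in> car A \<and> b \<in> car A} \<union>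
     {fgen (Inl a) | a. a \<notin> car A} \<union>
     {fmul (fgen (Inr (p, q))) (fgen (Inr (r, s))) - (if q = r then fgen (Inr (p, s)) else 0)
        | p q r s. p \<in> {i, j} \<and> q \<in> {i, j} \<and> r \<in> {i, j} \<and> s \<in> {i, j}} \<union>
     {fgen (Inr (p, p)) - fgen (Inl (e p)) | p. p \<in> {i, j}} \<union>
     {fgen (Inr (p, q)) | p q. p \<notin> {i, j} \<or> q \<notin> {i, j}}"

inductive_set fideal :: "('g, 'k::field) free set \<Rightarrow> ('g, 'k) free set" for R where
  rel: "r \<in> R \<Longrightarrow> r \<in> fideal R"
| zero: "0 \<in> fideal R"
| add: "x \<in> fideal R \<Longrightarrow> y \<in> fideal R \<Longrightarrow> x + y \<in> fideal R"
| lmul: "x \<in> fideal R \<Longrightarrow> fmul p x \<in> fideal R"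
| rmul: "x \<in> fideal R \<Longrightarrow> fmul x p \<in> fideal R"

definition fclass :: "('g, 'k::field) free set \<Rightarrow> ('g, 'k) free \<Rightarrow> ('g, 'k) free set" where
  "fclass J p = {q. p - q \<in> J}"

definition frep :: "('g, 'k::field) free set \<Rightarrow> ('g, 'k) free" where
  "frep X = (SOME p. p \<in> X)"

text \<open>Abar = A *_{k e_i + k e_j + k e^} (Mat_2(k) + k e^), as the quotient of the free
  algebra by the two-sided ideal generated by fus_rels.\<close>
definition Abar :: "('k::field, 'a) kalg \<Rightarrow> ('i \<Rightarrow> 'a) \<Rightarrow> 'i \<Rightarrow> 'i \<Rightarrow>
                    ('k, ('a, 'i, 'k) fbar set) kalg" where
  "Abar A e i j = (let J = fideal (fus_rels A e i j) in
     \<lparr> car = {fclass J p | p. True},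
       add = (\<lambda>X Y. fclass J (frep X + frep Y)),
       neg = (\<lambda>X. fclass J (- frep X)),
       zer = fclass J 0,
       mul = (\<lambda>X Y. fclass J (fmul (frep X) (frep Y))),
       one = fclass J fone,
       smul = (\<lambda>c X. fclass J (fscal c (frep X))) \<rparr>)"

definition iota :: "('k::field, 'a) kalg \<Rightarrow> ('i \<Rightarrow> 'a) \<Rightarrow> 'i \<Rightarrow> 'i \<Rightarrow> 'a \<Rightarrow> ('a, 'i, 'k) fbar set" where
  "iota A e i j a = fclass (fideal (fus_rels A e i j)) (fgen (Inl a))"

definition munit :: "('k::field, 'a) kalg \<Rightarrow> ('i \<Rightarrow> 'a) \<Rightarrow> 'i \<Rightarrow> 'i \<Rightarrow> 'i \<Rightarrow> 'i \<Rightarrow> ('a, 'i, 'k) fbar set" where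
  "munit A e i j p q = fclass (fideal (fus_rels A e i j)) (fgen (Inr (p, q)))"

definition feps :: "('k::field, 'a) kalg \<Rightarrow> ('i \<Rightarrow> 'a) \<Rightarrow> 'i \<Rightarrow> 'i \<Rightarrow> ('a, 'i, 'k) fbar set" where
  "feps A e i j = sub (Abar A e i j) (one (Abar A e i j)) (iota A e i j (e j))"

text \<open>Fusion of e_j onto e_i: A^f = epsilon Abar epsilon, with unit epsilon.\<close>
definition fusion :: "('k::field, 'a) kalg \<Rightarrow> ('i \<Rightarrow> 'a) \<Rightarrow> 'i \<Rightarrow> 'i \<Rightarrow>
                      ('k, ('a, 'i, 'k) fbar set) kalg" where
  "fusion A e i j = (let Ab = Abar A e i j; ep = feps A e i j in
      Ab\<lparr> car := {mul Ab ep (mul Ab x ep) | x. x \<in> car Ab}, one := ep \<rparr>)"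

definition fus_idem :: "('k::field, 'a) kalg \<Rightarrow> ('i \<Rightarrow> 'a) \<Rightarrow> 'i \<Rightarrow> 'i \<Rightarrow> 'i \<Rightarrow> ('a, 'i, 'k) fbar set" where
  "fus_idem A e i j s = iota A e i j (e s)"

definition fus_index :: "'i list \<Rightarrow> 'i \<Rightarrow> 'i list" where
  "fus_index I j = filter (\<lambda>s. s \<noteq> j) I"

definition fpi :: "('k::field, 'a) kalg \<Rightarrow> ('i \<Rightarrow> 'a) \<Rightarrow> 'i \<Rightarrow> 'i \<Rightarrow> 'a \<Rightarrow> ('a, 'i, 'k) fbar set" where
  "fpi A e i j a = (let Ab = Abar A e i j; ep = feps A e i j; x = iota A e i j a;
                       eij = munit A e i j i j; eji = munit A e i j j i; M = mul Ab in
     add Ab (add Ab (M ep (M x ep)) (M eij (M x eji))) (add Ab (M eij (M x ep)) (M ep (M x eji))))"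

text \<open>The induced double bracket on A^f is the B-linear double bracket determined by
  {{e_a a f_a, e_b b f_b}} = e_b {{a,b}}' f_a \<otimes> e_a {{a,b}}'' f_b on the generators,
  where e_a = e_ij if la (then a \<in> e_j A) and e_a = eps otherwise (then a \<in> eps A),
  f_a = e_ji if ra (then a \<in> A e_j) and f_a = eps otherwise (then a \<in> A eps).\<close>
definition induced_bracket ::
  "('k::field, 'a) kalg \<Rightarrow> ('i \<Rightarrow> 'a) \<Rightarrow> 'i list \<Rightarrow> 'i \<Rightarrow> 'i \<Rightarrow> ('a \<Rightarrow> 'a \<Rightarrow> ('a \<times> 'a) list) \<Rightarrow>
   (('a, 'i, 'k) fbar set \<Rightarrow> ('a, 'i, 'k) fbar set \<Rightarrow> (('a, 'i, 'k) fbar set \<times> ('a, 'i, 'k) fbar set) list)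
   \<Rightarrow> bool" where
  "induced_bracket A e I i j brA br \<longleftrightarrow>
    (let F = fusion A e i j; Ab = Abar A e i j; M = mul Ab; ep = feps A e i j;
         eij = munit A e i j i j; eji = munit A e i j j i; io = iota A e i j;
         L = (\<lambda>l. if l then eij else ep); R = (\<lambda>r. if r then eji else ep);
         cA = (\<lambda>l. if l then e j else sub A (one A) (e j)) in
     dbl_bracket F (fus_idem A e i j) (fus_index I j) br \<and>
     (\<forall>a\<in>car A. \<forall>b\<in>car A. \<forall>la ra lb rb.
        mul A (cA la) a = a \<and> mul A a (cA ra) = a \<and>
        mul A (cA lb) b = b \<and> mul A b (cA rb) = b \<longrightarrow>
        tens_eq F (br (M (L la) (M (io a) (R ra))) (M (L lb) (M (io b) (R rb))))
          (map (\<lambda>(p, q). (M (L lb) (M (io p) (R ra)), M (L la) (M (io q) (R rb)))) (brA a b))))"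

definition alg_iso :: "('k, 'a) kalg \<Rightarrow> ('k, 'b) kalg \<Rightarrow> ('a \<Rightarrow> 'b) \<Rightarrow> bool" where
  "alg_iso K L f \<longleftrightarrow> bij_betw f (car K) (car L) \<and> f (one K) = one L \<and>
     (\<forall>x\<in>car K. \<forall>y\<in>car K. f (add K x y) = add L (f x) (f y) \<and> f (mul K x y) = mul L (f x) (f y)) \<and>
     (\<forall>c. \<forall>x\<in>car K. f (smul K c x) = smul L c (f x))"

end

theory Submission
  imports Defs
begin

instantiation list :: (type) monoid_add
begin
definition plus_list :: "'a list \<Rightarrow> 'a list \<Rightarrow> 'a list" where "plus_list = (@)"
definition zero_list :: "'a list" where "zero_list = []"
instance by standard (simp_all add: plus_list_def zero_list_def)
end

lemma pm_expand: "(p::'a \<Rightarrow>\<^sub>0 'b::comm_monoid_add) = (\<Sum>u\<in>Poly_Mapping.keys p. Poly_Mapping.single u (Poly_Mapping.lookup p u))"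
  by (rule poly_mapping_eqI) (auto simp: lookup_sum lookup_single when_def in_keys_iff)

lemma fmul_eq: "fmul p q = p * q"
proof -
  have "p * q = (\<Sum>u\<in>Poly_Mapping.keys p. Poly_Mapping.single u (Poly_Mapping.lookup p u)) * (\<Sum>v\<in>Poly_Mapping.keys q. Poly_Mapping.single v (Poly_Mapping.lookup q v))"
    using pm_expand[of p] pm_expand[of q] by simp
  also have "\<dots> = fmul p q"
    unfolding fmul_def sum_distrib_left sum_distrib_right
    by (subst sum.swap) (simp add: mult_single plus_list_def sum_distrib_left)
  finally show ?thesis by simp
qed


lemma nil0: "[] = (0::'a list)" by (simp add: zero_list_def)

lemma fone_eq: "fone = 1" by (simp add: fone_def nil0)

lemma fscal_eq: "fscal c p = Poly_Mapping.single [] c * p" by (simp add: fscal_def fmul_eq)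

lemma fideal_mul: "x \<in> fideal R \<Longrightarrow> p * x \<in> fideal R" "x \<in> fideal R \<Longrightarrow> x * p \<in> fideal R"
  using fideal.lmul fideal.rmul by (auto simp: fmul_eq)

lemma fideal_neg: "x \<in> fideal R \<Longrightarrow> - x \<in> fideal R"
proof -
  assume "x \<in> fideal R"
  hence "(-1) * x \<in> fideal R" by (rule fideal_mul)
  thus ?thesis by simp
qed

lemma fideal_diff: "x \<in> fideal R \<Longrightarrow> y \<in> fideal R \<Longrightarrow> x - y \<in> fideal R"
  using fideal.add[OF _ fideal_neg] by (metis diff_conv_add_uminus)

lemma fclass_eq_iff: "fclass (fideal R) p = fclass (fideal R) q \<longleftrightarrow> p - q \<in> fideal R"
proof
  assume "fclass (fideal R) p = fclass (fideal R) q"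
  moreover have "q \<in> fclass (fideal R) q" by (simp add: fclass_def fideal.zero)
  ultimately have "q \<in> fclass (fideal R) p" by simp
  thus "p - q \<in> fideal R" by (simp add: fclass_def)
next
  assume h: "p - q \<in> fideal R"
  show "fclass (fideal R) p = fclass (fideal R) q"
  proof (auto simp: fclass_def)
    fix x assume "p - x \<in> fideal R"
    from fideal_diff[OF this h] show "q - x \<in> fideal R" by simp
  next
    fix x assume "q - x \<in> fideal R"
    from fideal.add[OF h this] show "p - x \<in> fideal R" by simp
  qed
qed

lemma frep_class: "fclass (fideal R) (frep (fclass (fideal R) p)) = fclass (fideal R) p"
proof -
  have "p \<in> fclass (fideal R) p" by (simp add: fclass_def fideal.zero)
  hence "frep (fclass (fideal R) p) \<in> fclass (fideal R) p" unfolding frep_def by (rule someI)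
  hence "p - frep (fclass (fideal R) p) \<in> fideal R" by (simp add: fclass_def)
  hence "frep (fclass (fideal R) p) - p \<in> fideal R" using fideal_neg by fastforce
  thus ?thesis by (simp add: fclass_eq_iff)
qed

lemma fclass_add: "fclass (fideal R) p = fclass (fideal R) p' \<Longrightarrow> fclass (fideal R) q = fclass (fideal R) q' \<Longrightarrow>
   fclass (fideal R) (p + q) = fclass (fideal R) (p' + q')"
proof -
  assume a: "fclass (fideal R) p = fclass (fideal R) p'" "fclass (fideal R) q = fclass (fideal R) q'"
  hence "p - p' \<in> fideal R" "q - q' \<in> fideal R" by (simp_all add: fclass_eq_iff)
  from fideal.add[OF this] have "(p + q) - (p' + q') \<in> fideal R" by (simp add: algebra_simps)
  thus ?thesis by (simp add: fclass_eq_iff)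
qed

lemma fclass_mul: "fclass (fideal R) p = fclass (fideal R) p' \<Longrightarrow> fclass (fideal R) q = fclass (fideal R) q' \<Longrightarrow>
   fclass (fideal R) (p * q) = fclass (fideal R) (p' * q')"
proof -
  assume a: "fclass (fideal R) p = fclass (fideal R) p'" "fclass (fideal R) q = fclass (fideal R) q'"
  hence "p - p' \<in> fideal R" "q - q' \<in> fideal R" by (simp_all add: fclass_eq_iff)
  hence "(p - p') * q \<in> fideal R" "p' * (q - q') \<in> fideal R" by (simp_all add: fideal_mul)
  from fideal.add[OF this] have "(p * q) - (p' * q') \<in> fideal R" by (simp add: algebra_simps)
  thus ?thesis by (simp add: fclass_eq_iff)
qed

lemma fclass_neg: "fclass (fideal R) p = fclass (fideal R) p' \<Longrightarrow>
   fclass (fideal R) (- p) = fclass (fideal R) (- p')"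
proof -
  assume "fclass (fideal R) p = fclass (fideal R) p'"
  hence "p - p' \<in> fideal R" by (simp add: fclass_eq_iff)
  from fideal_neg[OF this] have "- p - - p' \<in> fideal R" by simp
  thus ?thesis by (simp add: fclass_eq_iff)
qed

lemma symm_rels: "fus_rels A e i j = fus_rels A e j i"
  unfolding fus_rels_def by (simp only: insert_commute[of i j])

lemma Abar_sym: "Abar A e i j = Abar A e j i"
  by (simp only: Abar_def symm_rels[of A e i j])

lemma munit_sym: "munit A e i j p q = munit A e j i p q" and iota_sym: "iota A e i j a = iota A e j i a"
  by (simp_all only: munit_def iota_def symm_rels[of A e i j])


locale ka =
  fixes K :: "('k::field, 'a) kalg"
  assumes KA: "is_kalg K"
begin

lemma cl: "zer K \<in> car K" "one K \<in> car K"
  "x \<in> car K \<Longrightarrow> y \<in> car K \<Longrightarrow> add K x y \<in> car K"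
  "x \<in> car K \<Longrightarrow> y \<in> car K \<Longrightarrow> mul K x y \<in> car K"
  "x \<in> car K \<Longrightarrow> neg K x \<in> car K"
  "x \<in> car K \<Longrightarrow> smul K c x \<in> car K"
  using KA unfolding is_kalg_def by blast+

lemma ax: 
  "x \<in> car K \<Longrightarrow> y \<in> car K \<Longrightarrow> z \<in> car K \<Longrightarrow> add K (add K x y) z = add K x (add K y z)"
  "x \<in> car K \<Longrightarrow> y \<in> car K \<Longrightarrow> z \<in> car K \<Longrightarrow> mul K (mul K x y) z = mul K x (mul K y z)"
  "x \<in> car K \<Longrightarrow> y \<in> car K \<Longrightarrow> z \<in> car K \<Longrightarrow> mul K x (add K y z) = add K (mul K x y) (mul K x z)"
  "x \<in> car K \<Longrightarrow> y \<in> car K \<Longrightarrow> z \<in> car K \<Longrightarrow> mul K (add K x y) z = add K (mul K x z) (mul K y z)"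
  "x \<in> car K \<Longrightarrow> y \<in> car K \<Longrightarrow> add K x y = add K y x"
  "x \<in> car K \<Longrightarrow> add K x (zer K) = x"
  "x \<in> car K \<Longrightarrow> add K x (neg K x) = zer K"
  "x \<in> car K \<Longrightarrow> mul K (one K) x = x"
  "x \<in> car K \<Longrightarrow> mul K x (one K) = x"
  "x \<in> car K \<Longrightarrow> y \<in> car K \<Longrightarrow> smul K c (add K x y) = add K (smul K c x) (smul K c y)"
  "x \<in> car K \<Longrightarrow> smul K (c + d) x = add K (smul K c x) (smul K d x)"
  "x \<in> car K \<Longrightarrow> smul K (c * d) x = smul K c (smul K d x)"
  "x \<in> car K \<Longrightarrow> smul K 1 x = x"
  "x \<in> car K \<Longrightarrow> y \<in> car K \<Longrightarrow> mul K (smul K c x) y = smul K c (mul K x y)"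
  "x \<in> car K \<Longrightarrow> y \<in> car K \<Longrightarrow> mul K x (smul K c y) = smul K c (mul K x y)"
  using KA unfolding is_kalg_def by blast+

lemma zero_add: "x \<in> car K \<Longrightarrow> add K (zer K) x = x"
  using ax(5)[of x "zer K"] ax(6) cl by auto

lemma neg_add: "x \<in> car K \<Longrightarrow> add K (neg K x) x = zer K"
  using ax(5)[of x "neg K x"] ax(7) cl by auto

lemma add_lcancel: assumes "x \<in> car K" "y \<in> car K" "z \<in> car K" "add K x y = add K x z" shows "y = z"
proof -
  have "add K (neg K x) (add K x y) = add K (neg K x) (add K x z)" using assms by simp
  thus ?thesis using assms ax(1)[of "neg K x" x] neg_add zero_add cl by (metis)
qed

lemma idem_zero: assumes "x \<in> car K" "add K x x = x" shows "x = zer K"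
  using add_lcancel[of x x "zer K"] assms ax(6) cl by auto

lemma smul0: "x \<in> car K \<Longrightarrow> smul K 0 x = zer K"
  by (rule idem_zero) (auto simp: cl ax(11)[symmetric])

lemma mul0: "x \<in> car K \<Longrightarrow> mul K (zer K) x = zer K" "x \<in> car K \<Longrightarrow> mul K x (zer K) = zer K"
proof -
  assume x: "x \<in> car K"
  have "add K (mul K (zer K) x) (mul K (zer K) x) = mul K (zer K) x"
    using ax(4)[of "zer K" "zer K" x] ax(6)[of "zer K"] x cl by simp
  thus "mul K (zer K) x = zer K" by (rule idem_zero[rotated]) (simp add: x cl)
  have "add K (mul K x (zer K)) (mul K x (zer K)) = mul K x (zer K)"
    using ax(3)[of x "zer K" "zer K"] ax(6)[of "zer K"] x cl by simp
  thus "mul K x (zer K) = zer K" by (rule idem_zero[rotated]) (simp add: x cl)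
qed

lemma neg_unique: assumes "x \<in> car K" "y \<in> car K" "add K x y = zer K" shows "y = neg K x"
  using add_lcancel[of x y "neg K x"] assms ax(7) cl by auto

lemma neg_mul: "x \<in> car K \<Longrightarrow> y \<in> car K \<Longrightarrow> mul K (neg K x) y = neg K (mul K x y)"
  by (rule neg_unique) (auto simp: cl ax(4)[symmetric] neg_add ax(7) mul0 ax(5)[of x])
lemma mul_neg: "x \<in> car K \<Longrightarrow> y \<in> car K \<Longrightarrow> mul K x (neg K y) = neg K (mul K x y)"
  by (rule neg_unique) (auto simp: cl ax(3)[symmetric] neg_add ax(7) mul0)

lemma neg_smul: "x \<in> car K \<Longrightarrow> neg K x = smul K (-1) x"
proof -
  assume x: "x \<in> car K"
  have "add K x (smul K (-1) x) = add K (smul K 1 x) (smul K (-1) x)" using x ax(13) by simp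
  also have "\<dots> = smul K (1 + -1) x" using x ax(11)[symmetric] by simp
  also have "\<dots> = zer K" using x smul0 by simp
  finally show ?thesis using neg_unique[of x "smul K (-1) x"] x cl by simp
qed

lemma add_lcomm: "x \<in> car K \<Longrightarrow> y \<in> car K \<Longrightarrow> z \<in> car K \<Longrightarrow> add K x (add K y z) = add K y (add K x z)"
  by (metis ax(1) ax(5))

lemma smul_zer: "smul K c (zer K) = zer K"
  by (metis ax(12) cl(1) mult_zero_right smul0)

end


locale bA = ka K for K :: "('k::field, 'a) kalg" +
  fixes e :: "'i \<Rightarrow> 'a" and I :: "'i list"
  assumes BAl: "B_algebra K e I"
begin

lemma dI: "distinct I" and eC: "s \<in> set I \<Longrightarrow> e s \<in> car K"
  and orth: "s \<in> set I \<Longrightarrow> t \<in> set I \<Longrightarrow> mul K (e s) (e t) = (if s = t then e s else zer K)"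
  and lc1: "lincomb K e (\<lambda>_. 1) I = one K"
  using BAl unfolding B_algebra_def by blast+

lemma lc_cons: "lincomb K e c (s # L) = add K (smul K (c s) (e s)) (lincomb K e c L)"
  and lc_nil: "lincomb K e c [] = zer K"
  by (simp_all add: lincomb_def)

lemma lc_car: "set L \<subseteq> set I \<Longrightarrow> lincomb K e c L \<in> car K"
  by (induction L) (auto simp: lc_cons lc_nil cl eC)

lemma lc_add: "set L \<subseteq> set I \<Longrightarrow> lincomb K e (\<lambda>s. c s + d s) L = add K (lincomb K e c L) (lincomb K e d L)"
proof (induction L)
  case Nil thus ?case by (simp add: lc_nil ax(6) cl)
next
  case (Cons s L)
  hence s: "e s \<in> car K" and L: "set L \<subseteq> set I" using eC by auto
  have "lincomb K e (\<lambda>s. c s + d s) (s # L) = add K (add K (smul K (c s) (e s)) (smul K (d s) (e s)))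
          (add K (lincomb K e c L) (lincomb K e d L))"
    using Cons L s by (simp add: lc_cons ax(11))
  also have "\<dots> = add K (lincomb K e c (s # L)) (lincomb K e d (s # L))"
    unfolding lc_cons using s lc_car[OF L] cl
    by (simp add: ax(1) add_lcomm)
  finally show ?case .
qed

lemma lc_smul: "set L \<subseteq> set I \<Longrightarrow> smul K k (lincomb K e c L) = lincomb K e (\<lambda>s. k * c s) L"
  by (induction L) (auto simp: lc_cons lc_nil smul_zer ax(10) ax(12) cl eC lc_car)

lemma lc_neg: "set L \<subseteq> set I \<Longrightarrow> neg K (lincomb K e c L) = lincomb K e (\<lambda>s. - c s) L"
  by (simp add: neg_smul lc_car lc_smul)

lemma lc_es: "s \<in> set I \<Longrightarrow> set L \<subseteq> set I \<Longrightarrow> distinct L \<Longrightarrow>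
    mul K (e s) (lincomb K e c L) = (if s \<in> set L then smul K (c s) (e s) else zer K)"
proof (induction L)
  case Nil thus ?case by (simp add: lc_nil mul0 eC)
next
  case (Cons t L)
  have "mul K (e s) (lincomb K e c (t # L)) = add K (smul K (c t) (mul K (e s) (e t))) (mul K (e s) (lincomb K e c L))"
    using Cons.prems by (simp add: lc_cons ax(3) ax(15) cl eC lc_car)
  thus ?case using Cons by (auto simp: orth smul_zer zero_add ax(6) cl eC)
qed

lemma lc_es': "s \<in> set I \<Longrightarrow> set L \<subseteq> set I \<Longrightarrow> distinct L \<Longrightarrow>
    mul K (lincomb K e c L) (e s) = (if s \<in> set L then smul K (c s) (e s) else zer K)"
proof (induction L)
  case Nil thus ?case by (simp add: lc_nil mul0 eC)
next
  case (Cons t L)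
  have "mul K (lincomb K e c (t # L)) (e s) = add K (smul K (c t) (mul K (e t) (e s))) (mul K (lincomb K e c L) (e s))"
    using Cons.prems by (simp add: lc_cons ax(4) ax(14) cl eC lc_car)
  thus ?case using Cons by (auto simp: orth smul_zer zero_add ax(6) cl eC)
qed

lemma lc_mul: "set L \<subseteq> set I \<Longrightarrow> distinct L \<Longrightarrow>
    mul K (lincomb K e c L) (lincomb K e d L) = lincomb K e (\<lambda>s. c s * d s) L"
proof (induction L)
  case Nil thus ?case by (simp add: lc_nil mul0 cl)
next
  case (Cons t L)
  hence t: "t \<in> set I" "e t \<in> car K" and L: "set L \<subseteq> set I" "distinct L" "t \<notin> set L" using eC by auto
  have "mul K (lincomb K e c (t # L)) (lincomb K e d (t # L)) =
     add K (smul K (c t) (mul K (e t) (lincomb K e d (t # L)))) (mul K (lincomb K e c L) (lincomb K e d (t # L)))"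
    using t L by (simp add: lc_cons ax(4) ax(14) cl lc_car)
  also have "mul K (e t) (lincomb K e d (t # L)) = smul K (d t) (e t)"
    using lc_es[of t "t # L" d] Cons.prems t by simp
  also have "mul K (lincomb K e c L) (lincomb K e d (t # L)) = mul K (lincomb K e c L) (lincomb K e d L)"
    using t L by (simp add: lc_cons ax(3) ax(15) cl lc_car lc_es' smul_zer zero_add)
  finally show ?case using Cons L t by (simp add: lc_cons ax(12)[symmetric] mult.commute)
qed

lemma lc_ind: "s \<in> set L \<Longrightarrow> set L \<subseteq> set I \<Longrightarrow> distinct L \<Longrightarrow> lincomb K e (\<lambda>t. if t = s then 1 else 0) L = e s"
proof (induction L)
  case Nil thus ?case by simp
next
  case (Cons t L)
  show ?case
  proof (cases "t = s")
    case True
    hence "lincomb K e (\<lambda>t. if t = s then 1 else 0) L = zer K"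
    proof -
      have "s \<notin> set L" using Cons True by auto
      hence "lincomb K e (\<lambda>t. if t = s then 1 else 0) L = lincomb K e (\<lambda>t. 0) L"
        unfolding lincomb_def by (induction L) auto
      also have "\<dots> = smul K 0 (lincomb K e (\<lambda>t. 0) L)" using lc_smul[of L 0 "\<lambda>t. 0"] Cons by simp
      also have "\<dots> = zer K" using Cons by (simp add: smul0 lc_car)
      finally show ?thesis .
    qed
    thus ?thesis using True Cons eC by (simp add: lc_cons ax(13) ax(6))
  next
    case False
    hence "s \<in> set L" using Cons by auto
    hence "e s \<in> car K" using Cons eC by auto
    thus ?thesis using False Cons eC by (simp add: lc_cons smul0 zero_add)
  qed
qed

lemma lc_cong: "(\<And>s. s \<in> set L \<Longrightarrow> c s = d s) \<Longrightarrow> lincomb K e c L = lincomb K e d L"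
  unfolding lincomb_def by (induction L) auto

lemma kspanI: "lincomb K e c I \<in> kspan K e I" by (auto simp: kspan_def)

end

lemmas tens_trans[trans] = tens_eq.trans

definition lin :: "('k, 'a) kalg \<Rightarrow> ('k, 'b) kalg \<Rightarrow> ('a \<Rightarrow> 'b) \<Rightarrow> bool" where
  "lin K L f \<longleftrightarrow> (\<forall>x\<in>car K. f x \<in> car L) \<and> (\<forall>x\<in>car K. \<forall>y\<in>car K. f (add K x y) = add L (f x) (f y)) \<and>
     (\<forall>c. \<forall>x\<in>car K. f (smul K c x) = smul L c (f x)) \<and> f (zer K) = zer L"

definition pmap :: "('a \<Rightarrow> 'b) \<Rightarrow> ('a \<Rightarrow> 'b) \<Rightarrow> ('a \<times> 'a) list \<Rightarrow> ('b \<times> 'b) list" where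
  "pmap f g t = map (\<lambda>(p, q). (f p, g q)) t"

lemma pmap_simps[simp]: "pmap f g [] = []" "pmap f g (x # t) = (f (fst x), g (snd x)) # pmap f g t"
  "pmap f g (t @ u) = pmap f g t @ pmap f g u"
  by (auto simp: pmap_def split: prod.splits)

lemma tens_transport:
  assumes "tens_eq K t u" and f: "lin K L f" and g: "lin K L g"
  shows "tens_eq L (pmap f g t) (pmap f g u)"
  using assms(1)
proof (induction rule: tens_eq.induct)
  case (refl t) thus ?case by (rule tens_eq.refl)
next
  case (sym t u) thus ?case by (blast intro: tens_eq.sym)
next
  case (trans t u v) thus ?case by (blast intro: tens_eq.trans)
next
  case (app t t' u u') thus ?case by (simp add: tens_eq.app)
next
  case (swap t u) thus ?case by (simp add: tens_eq.swap)
next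
  case (addl x x' y) thus ?case using f g unfolding lin_def by (auto intro: tens_eq.addl)
next
  case (addr x y y') thus ?case using f g unfolding lin_def by (auto intro: tens_eq.addr)
next
  case (scal x y c) thus ?case using f g unfolding lin_def by (auto intro: tens_eq.scal)
next
  case (zero y) thus ?case using f g unfolding lin_def by (auto intro: tens_eq.zero)
qed

lemma lin_comp: "lin K L f \<Longrightarrow> lin L M g \<Longrightarrow> lin K M (\<lambda>x. g (f x))"
  by (auto simp: lin_def)

lemma lin_id: "lin K K id" "lin K K (\<lambda>x. x)" by (auto simp: lin_def)

lemma pmap_id: "pmap (\<lambda>x. x) (\<lambda>x. x) t = t" "pmap id id t = t" by (induction t) auto

lemma pmap_comp: "pmap f g (pmap f' g' t) = pmap (\<lambda>x. f (f' x)) (\<lambda>x. g (g' x)) t"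
  by (induction t) auto

lemma pmap_cong: "(\<And>p q. (p, q) \<in> set t \<Longrightarrow> f p = f' p \<and> g q = g' q) \<Longrightarrow> pmap f g t = pmap f' g' t"
  by (induction t) (auto, metis prod.collapse, metis prod.collapse)

lemma tens_eq_pairwise:
  assumes "\<And>x. x \<in> set t \<Longrightarrow> tens_eq K [h x] [h' x]"
  shows "tens_eq K (map h t) (map h' t)"
  using assms
proof (induction t)
  case Nil thus ?case by (simp add: tens_eq.refl)
next
  case (Cons x t)
  have "tens_eq K ([h x] @ map h t) ([h' x] @ map h' t)" using Cons by (intro tens_eq.app) auto
  thus ?case by simp
qed

context ka begin

lemma tens_zero_r: "y \<in> car K \<Longrightarrow> tens_eq K [] [(y, zer K)]"
proof -
  assume y: "y \<in> car K"
  have "tens_eq K [] [(smul K 0 y, y)]" using y tens_eq.zero[OF y] by (simp add: smul0)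
  also have "tens_eq K [(smul K 0 y, y)] [(y, smul K 0 y)]" by (rule tens_eq.scal[OF y y])
  finally show ?thesis using y by (simp add: smul0)
qed

lemma tswap_cong: "tens_eq K t u \<Longrightarrow> tens_eq K (tswap t) (tswap u)"
proof (induction rule: tens_eq.induct)
  case (refl t) thus ?case by (rule tens_eq.refl)
next
  case (sym t u) thus ?case by (blast intro: tens_eq.sym)
next
  case (trans t u v) thus ?case by (blast intro: tens_eq.trans)
next
  case (app t t' u u') thus ?case by (simp add: tswap_def tens_eq.app)
next
  case (swap t u) thus ?case by (simp add: tswap_def tens_eq.swap)
next
  case (addl x x' y) thus ?case by (auto simp: tswap_def intro: tens_eq.addr)
next
  case (addr x y y') thus ?case by (auto simp: tswap_def intro: tens_eq.addl)
next
  case (scal x y c) thus ?case by (auto simp: tswap_def intro: tens_eq.scal tens_eq.sym)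
next
  case (zero y) thus ?case by (auto simp: tswap_def intro: tens_zero_r)
qed

lemma lin_lmul: "a \<in> car K \<Longrightarrow> lin K K (mul K a)"
  by (auto simp: lin_def cl ax(3) ax(15) mul0)
lemma lin_rmul: "b \<in> car K \<Longrightarrow> lin K K (\<lambda>x. mul K x b)"
  by (auto simp: lin_def cl ax(4) ax(14) mul0)
lemma lin_neg: "lin K K (neg K)"
  by (auto simp: lin_def cl neg_smul ax(10) ax(12)[symmetric] mult.commute smul_zer)
lemma lin_smul: "lin K K (smul K c)"
  by (auto simp: lin_def cl ax(10) ax(12)[symmetric] mult.commute smul_zer)

lemma tlmul_pmap: "tlmul K a t = pmap (mul K a) (\<lambda>x. x) t" by (simp add: tlmul_def pmap_def)
lemma trmul_pmap: "trmul K t b = pmap (\<lambda>x. x) (\<lambda>x. mul K x b) t" by (simp add: trmul_def pmap_def)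
lemma tneg_pmap: "tneg K t = pmap (neg K) (\<lambda>x. x) t" by (simp add: tneg_def pmap_def)
lemma tscal_pmap: "tscal K c t = pmap (smul K c) (\<lambda>x. x) t" by (simp add: tscal_def pmap_def)
lemma tmap_pmap: "tmap f t = pmap f f t" by (simp add: tmap_def pmap_def)

lemma tens_nil_pmap: "tens_eq K t [] \<Longrightarrow> lin K L f \<Longrightarrow> lin K L g \<Longrightarrow> tens_eq L (pmap f g t) []"
  using tens_transport[of K t "[]" L f g] by simp

end


locale bbr = bA K e I for K :: "('k::field, 'a) kalg" and e I +
  fixes br :: "'a \<Rightarrow> 'a \<Rightarrow> ('a \<times> 'a) list"
  assumes DB: "dbl_bracket K e I br"
begin

lemma br_car: "x \<in> car K \<Longrightarrow> y \<in> car K \<Longrightarrow> set (br x y) \<subseteq> car K \<times> car K"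
  and br_addl: "x \<in> car K \<Longrightarrow> y \<in> car K \<Longrightarrow> z \<in> car K \<Longrightarrow> tens_eq K (br (add K x y) z) (br x z @ br y z)"
  and br_addr: "x \<in> car K \<Longrightarrow> y \<in> car K \<Longrightarrow> z \<in> car K \<Longrightarrow> tens_eq K (br x (add K y z)) (br x y @ br x z)"
  and br_smull: "x \<in> car K \<Longrightarrow> y \<in> car K \<Longrightarrow> tens_eq K (br (smul K c x) y) (tscal K c (br x y))"
  and br_smulr: "x \<in> car K \<Longrightarrow> y \<in> car K \<Longrightarrow> tens_eq K (br x (smul K c y)) (tscal K c (br x y))"
  and br_anti: "x \<in> car K \<Longrightarrow> y \<in> car K \<Longrightarrow> tens_eq K (br x y) (tneg K (tswap (br y x)))"
  and br_leib: "x \<in> car K \<Longrightarrow> y \<in> car K \<Longrightarrow> z \<in> car K \<Longrightarrow> tens_eq K (br x (mul K y z)) (trmul K (br x y) z @ tlmul K y (br x z))"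
  and br_kl: "b \<in> kspan K e I \<Longrightarrow> x \<in> car K \<Longrightarrow> tens_eq K (br b x) []"
  and br_kr: "b \<in> kspan K e I \<Longrightarrow> x \<in> car K \<Longrightarrow> tens_eq K (br x b) []"
  using DB unfolding dbl_bracket_def by blast+

lemma negneg_pair: "p \<in> car K \<Longrightarrow> q \<in> car K \<Longrightarrow> tens_eq K [(neg K p, neg K q)] [(p, q)]"
proof -
  assume pq: "p \<in> car K" "q \<in> car K"
  have "tens_eq K [(smul K (-1) p, smul K (-1) q)] [(p, smul K (-1) (smul K (-1) q))]"
    by (rule tens_eq.scal) (auto simp: pq cl)
  thus ?thesis using pq by (simp add: neg_smul ax(12)[symmetric] ax(13) cl)
qed

lemma projR: assumes "d = lincomb K e c I" "x \<in> car K" "b \<in> car K" "mul K d b = b"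
  shows "tens_eq K (br x b) (pmap (mul K d) (\<lambda>q. q) (br x b))"
proof -
  have d: "d \<in> car K" using assms lc_car by auto
  have "tens_eq K (br x (mul K d b)) (trmul K (br x d) b @ tlmul K d (br x b))"
    using br_leib d assms by blast
  also have "tens_eq K (trmul K (br x d) b @ tlmul K d (br x b)) ([] @ tlmul K d (br x b))"
  proof (rule tens_eq.app[OF _ tens_eq.refl])
    have "tens_eq K (br x d) []" using br_kr[of d x] assms kspanI by auto
    from tens_nil_pmap[OF this lin_id(2) lin_rmul[OF assms(3)]] show "tens_eq K (trmul K (br x d) b) []"
      by (simp add: trmul_pmap)
  qed
  finally show ?thesis using assms by (simp add: tlmul_pmap)
qed

lemma projR': assumes "d = lincomb K e c I" "x \<in> car K" "b \<in> car K" "mul K b d = b"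
  shows "tens_eq K (br x b) (pmap (\<lambda>q. q) (\<lambda>q. mul K q d) (br x b))"
proof -
  have d: "d \<in> car K" using assms lc_car by auto
  have "tens_eq K (br x (mul K b d)) (trmul K (br x b) d @ tlmul K b (br x d))"
    using br_leib d assms by blast
  also have "tens_eq K (trmul K (br x b) d @ tlmul K b (br x d)) (trmul K (br x b) d @ [])"
  proof (rule tens_eq.app[OF tens_eq.refl])
    have "tens_eq K (br x d) []" using br_kr[of d x] assms kspanI by auto
    from tens_nil_pmap[OF this lin_lmul[OF assms(3)] lin_id(2)] show "tens_eq K (tlmul K b (br x d)) []"
      by (simp add: tlmul_pmap)
  qed
  finally show ?thesis using assms by (simp add: trmul_pmap)
qed

lemma anti_trans: assumes x: "x \<in> car K" and y: "y \<in> car K"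
  and h: "tens_eq K (br y x) (pmap f g (br y x))" and f: "lin K K f" and g: "lin K K g"
  and fn: "\<And>p. p \<in> car K \<Longrightarrow> f (neg K p) = neg K (f p)"
  shows "tens_eq K (br x y) (pmap g f (br x y))"
proof -
  have lneg: "lin K K (neg K)" by (rule lin_neg)
  have "tens_eq K (br x y) (tneg K (tswap (br y x)))" by (rule br_anti[OF x y])
  also have "tens_eq K (tneg K (tswap (br y x))) (tneg K (tswap (pmap f g (br y x))))"
    unfolding tneg_pmap by (rule tens_transport[OF tswap_cong[OF h] lneg lin_id(2)])
  also have "tens_eq K (tneg K (tswap (pmap f g (br y x)))) (tneg K (tswap (pmap f g (tneg K (tswap (br x y))))))"
  proof -
    have "tens_eq K (pmap f g (br y x)) (pmap f g (tneg K (tswap (br x y))))"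
      by (rule tens_transport[OF br_anti[OF y x] f g])
    from tswap_cong[OF this] show ?thesis unfolding tneg_pmap by (rule tens_transport[OF _ lneg lin_id(2)])
  qed
  also have "tneg K (tswap (pmap f g (tneg K (tswap (br x y))))) = map (\<lambda>(p, q). (neg K (g p), f (neg K q))) (br x y)"
    by (auto simp: tneg_def tswap_def pmap_def split: prod.splits)
  also have "tens_eq K (map (\<lambda>(p, q). (neg K (g p), f (neg K q))) (br x y)) (map (\<lambda>(p, q). (g p, f q)) (br x y))"
  proof (rule tens_eq_pairwise)
    fix pq assume "pq \<in> set (br x y)"
    then obtain p q where pq: "pq = (p, q)" "p \<in> car K" "q \<in> car K" using br_car[OF x y] by auto
    show "tens_eq K [case pq of (p, q) \<Rightarrow> (neg K (g p), f (neg K q))] [case pq of (p, q) \<Rightarrow> (g p, f q)]"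
      using negneg_pair[of "g p" "f q"] pq f g fn by (auto simp: lin_def)
  qed
  finally show ?thesis by (simp add: pmap_def)
qed

lemma proj4: assumes "d1 = lincomb K e c1 I" "d2 = lincomb K e c2 I" "d3 = lincomb K e c3 I" "d4 = lincomb K e c4 I"
  and a: "a \<in> car K" and b: "b \<in> car K"
  and h: "mul K d1 a = a" "mul K a d2 = a" "mul K d3 b = b" "mul K b d4 = b"
  shows "tens_eq K (br a b) (pmap (\<lambda>p. mul K d3 (mul K p d2)) (\<lambda>q. mul K d1 (mul K q d4)) (br a b))"
proof -
  have d: "d1 \<in> car K" "d2 \<in> car K" "d3 \<in> car K" "d4 \<in> car K" using assms lc_car by auto
  note l = lin_lmul[OF d(1)] lin_rmul[OF d(2)] lin_lmul[OF d(3)] lin_rmul[OF d(4)] lin_id(2)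
  have E1: "tens_eq K (br a b) (pmap (mul K d3) (\<lambda>q. q) (br a b))" by (rule projR[OF assms(3) a b h(3)])
  have E2: "tens_eq K (br a b) (pmap (\<lambda>q. q) (\<lambda>q. mul K q d4) (br a b))" by (rule projR'[OF assms(4) a b h(4)])
  have E3: "tens_eq K (br a b) (pmap (\<lambda>q. q) (mul K d1) (br a b))"
    by (rule anti_trans[OF a b projR[OF assms(1) b a h(1)] l(1) l(5)]) (simp add: mul_neg d)
  have E4: "tens_eq K (br a b) (pmap (\<lambda>q. mul K q d2) (\<lambda>q. q) (br a b))"
    by (rule anti_trans[OF a b projR'[OF assms(2) b a h(2)] l(5) l(2)]) simp
  have "tens_eq K (br a b) (pmap (mul K d3) (\<lambda>q. q) (br a b))" by (rule E1)
  also have "tens_eq K \<dots> (pmap (mul K d3) (\<lambda>q. q) (pmap (\<lambda>q. q) (\<lambda>q. mul K q d4) (br a b)))"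
    by (rule tens_transport[OF E2 l(3) l(5)])
  also have "\<dots> = pmap (mul K d3) (\<lambda>q. mul K q d4) (br a b)" by (simp add: pmap_comp)
  also have "tens_eq K \<dots> (pmap (mul K d3) (\<lambda>q. mul K q d4) (pmap (\<lambda>q. q) (mul K d1) (br a b)))"
    by (rule tens_transport[OF E3 l(3) l(4)])
  also have "\<dots> = pmap (mul K d3) (\<lambda>q. mul K (mul K d1 q) d4) (br a b)" by (simp add: pmap_comp)
  also have "tens_eq K \<dots> (pmap (mul K d3) (\<lambda>q. mul K (mul K d1 q) d4) (pmap (\<lambda>q. mul K q d2) (\<lambda>q. q) (br a b)))"
    by (rule tens_transport[OF E4 l(3) lin_comp[OF l(1) l(4)]])
  also have "\<dots> = pmap (\<lambda>p. mul K d3 (mul K p d2)) (\<lambda>q. mul K d1 (mul K q d4)) (br a b)"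
    unfolding pmap_comp
    by (rule pmap_cong) (use br_car[OF a b] d in \<open>auto simp: ax(2)\<close>)
  finally show ?thesis .
qed

end

locale fz = bbr A e I brA for A :: "('k::field, 'a) kalg" and e I brA +
  fixes i j :: 'i
  assumes iI: "i \<in> set I" and jI: "j \<in> set I" and ij: "i \<noteq> j"
begin

abbreviation "J \<equiv> fideal (fus_rels A e i j)"
abbreviation "Q \<equiv> fclass J"
abbreviation "Ab \<equiv> Abar A e i j"
abbreviation "F1 \<equiv> fusion A e i j"
abbreviation "F2 \<equiv> fusion A e j i"
definition X :: "'a \<Rightarrow> ('a, 'i, 'k) fbar" where "X a = fgen (Inl a)"
definition E :: "'i \<Rightarrow> 'i \<Rightarrow> ('a, 'i, 'k) fbar" where "E p q = fgen (Inr (p, q))"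
definition RE :: "'i \<Rightarrow> 'i \<Rightarrow> 'i \<Rightarrow> 'i \<Rightarrow> ('a, 'i, 'k) fbar" where
  "RE p q r s = E p q * E r s - (if q = r then E p s else 0)"
definition RD :: "'i \<Rightarrow> ('a, 'i, 'k) fbar" where "RD p = E p p - X (e p)"
definition RX :: "'a \<Rightarrow> 'a \<Rightarrow> ('a, 'i, 'k) fbar" where "RX a b = X a * X b - X (mul A a b)"
definition RA :: "'a \<Rightarrow> 'a \<Rightarrow> ('a, 'i, 'k) fbar" where "RA a b = X (add A a b) - (X a + X b)"
definition "eps1 = 1 - X (e j)"
definition "eps2 = 1 - X (e i)"
definition "U = E i j + E j i + (1 - E i i - E j j)"

lemma J_intros: "x \<in> J \<Longrightarrow> y \<in> J \<Longrightarrow> x + y \<in> J" "x \<in> J \<Longrightarrow> y \<in> J \<Longrightarrow> x - y \<in> J"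
  "x \<in> J \<Longrightarrow> - x \<in> J" "x \<in> J \<Longrightarrow> a * x \<in> J" "x \<in> J \<Longrightarrow> x * a \<in> J" "0 \<in> J"
  by (auto intro: fideal.add fideal_diff fideal_neg fideal_mul fideal.zero)

lemma rel_in: "r \<in> fus_rels A e i j \<Longrightarrow> r \<in> J" by (rule fideal.rel)

lemma RE_J: "p \<in> {i,j} \<Longrightarrow> q \<in> {i,j} \<Longrightarrow> r \<in> {i,j} \<Longrightarrow> s \<in> {i,j} \<Longrightarrow> RE p q r s \<in> J"
  unfolding RE_def E_def fmul_eq[symmetric] by (rule fideal.rel, unfold fus_rels_def, rule UnI1, rule UnI1, rule UnI2) blast
lemma RD_J: "p \<in> {i,j} \<Longrightarrow> RD p \<in> J"
  unfolding RD_def E_def X_def by (rule fideal.rel, unfold fus_rels_def, rule UnI1, rule UnI2) blast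
lemma RX_J0: "a \<in> car A \<Longrightarrow> b \<in> car A \<Longrightarrow> X (mul A a b) - X a * X b \<in> J"
  unfolding X_def fmul_eq[symmetric] by (rule_tac fideal.rel, unfold fus_rels_def, rule UnI1, rule UnI1, rule UnI1, rule UnI1, rule UnI2) blast
lemma RX_J: "a \<in> car A \<Longrightarrow> b \<in> car A \<Longrightarrow> RX a b \<in> J"
  using fideal_neg[OF RX_J0] by (simp add: RX_def)
lemma RA_J: "a \<in> car A \<Longrightarrow> b \<in> car A \<Longrightarrow> RA a b \<in> J"
  unfolding RA_def X_def by (rule_tac fideal.rel, unfold fus_rels_def, rule UnI1, rule UnI1, rule UnI1, rule UnI1, rule UnI1, rule UnI1, rule UnI2) blast
lemma RS_J: "a \<in> car A \<Longrightarrow> X (smul A c a) - Poly_Mapping.single [] c * X a \<in> J"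
  unfolding X_def fscal_eq[symmetric] by (rule_tac fideal.rel, unfold fus_rels_def, rule UnI1, rule UnI1, rule UnI1, rule UnI1, rule UnI1, rule UnI2) blast
lemma R1_J: "X (one A) - 1 \<in> J"
  unfolding X_def fone_eq[symmetric] by (rule_tac fideal.rel, unfold fus_rels_def, rule UnI1, rule UnI1, rule UnI1, rule UnI1, rule UnI1, rule UnI1, rule UnI1) blast
lemma Rout_J: "a \<notin> car A \<Longrightarrow> X a \<in> J"
  unfolding X_def by (rule_tac fideal.rel, unfold fus_rels_def, rule UnI1, rule UnI1, rule UnI1, rule UnI2) blast
lemma Eout_J: "p \<notin> {i,j} \<or> q \<notin> {i,j} \<Longrightarrow> E p q \<in> J"
  unfolding E_def by (rule_tac fideal.rel, unfold fus_rels_def, rule UnI2) blast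

lemma E_mul: "E p q * E r s = (if q = r then E p s else 0) + RE p q r s"
  "E p q * (E r s * w) = (if q = r then E p s * w else 0) + RE p q r s * w"
  by (simp_all add: RE_def left_diff_distrib flip: mult.assoc)
lemma X_mul: "X a * X b = X (mul A a b) + RX a b"
  "X a * (X b * w) = X (mul A a b) * w + RX a b * w"
  by (simp_all add: RX_def left_diff_distrib flip: mult.assoc)
lemma Xe: "X (e p) = E p p - RD p" by (simp add: RD_def)

lemmas rs = algebra_simps E_mul Xe ij ij[symmetric] eps1_def eps2_def U_def
lemmas Jr = J_intros RE_J RD_J RX_J RA_J

lemma U1: "U * U - 1 \<in> J"
  by (simp add: rs) (blast intro: Jr)

lemma U2: "U * eps1 - eps2 * U \<in> J"
  by (simp add: rs) (blast intro: Jr)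

lemma U3a: "U * (eps1 + E i j) - (eps2 + E j i) \<in> J"
  by (simp add: rs) (blast intro: Jr)
lemma U3b: "(eps1 + E j i) * U - (eps2 + E i j) \<in> J"
  by (simp add: rs) (blast intro: Jr)

lemma eqv_mul: "p - p' \<in> J \<Longrightarrow> q - q' \<in> J \<Longrightarrow> p * q - p' * q' \<in> J"
proof -
  assume "p - p' \<in> J" "q - q' \<in> J"
  hence "(p - p') * q + p' * (q - q') \<in> J" by (intro J_intros(1) J_intros(4) J_intros(5))
  thus ?thesis by (simp add: algebra_simps)
qed
lemma eqv_add: "p - p' \<in> J \<Longrightarrow> q - q' \<in> J \<Longrightarrow> (p + q) - (p' + q') \<in> J"
proof -
  assume "p - p' \<in> J" "q - q' \<in> J"
  from J_intros(1)[OF this] show ?thesis by (simp add: algebra_simps)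
qed
lemma eqv_refl: "p - p \<in> J" by (simp add: J_intros)
lemma eqv_sym: "p - q \<in> J \<Longrightarrow> q - p \<in> J" using J_intros(3) by fastforce
lemma eqv_trans: "p - q \<in> J \<Longrightarrow> q - r \<in> J \<Longrightarrow> p - r \<in> J" using J_intros(1) by fastforce

lemma U3: "U * (eps1 * X a * eps1 + E i j * X a * E j i + E i j * X a * eps1 + eps1 * X a * E j i) * U -
   (eps2 * X a * eps2 + E j i * X a * E i j + E j i * X a * eps2 + eps2 * X a * E i j) \<in> J"
proof -
  have "(U * (eps1 + E i j)) * X a * ((eps1 + E j i) * U) - (eps2 + E j i) * X a * (eps2 + E i j) \<in> J"
    by (intro eqv_mul U3a U3b eqv_refl)
  thus ?thesis by (simp add: algebra_simps)
qed

lemma rels_ji: "fus_rels A e j i = fus_rels A e i j" by (rule symm_rels)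
lemma Ab_ji: "Abar A e j i = Ab" by (rule Abar_sym[symmetric])

lemma frepQ: "Q (frep (Q p)) = Q p" by (rule frep_class)
lemma QeqI: "p - q \<in> J \<Longrightarrow> Q p = Q q" by (simp add: fclass_eq_iff)
lemma QeqD: "Q p = Q q \<Longrightarrow> p - q \<in> J" by (simp add: fclass_eq_iff)

lemma Ab_car: "car Ab = range Q" unfolding Abar_def Let_def by auto
lemma Ab_add: "add Ab (Q p) (Q q) = Q (p + q)"
  unfolding Abar_def Let_def by (simp add: fclass_add[OF frepQ frepQ])
lemma Ab_mul: "mul Ab (Q p) (Q q) = Q (p * q)"
  unfolding Abar_def Let_def by (simp add: fclass_mul[OF frepQ frepQ] fmul_eq)
lemma Ab_neg: "neg Ab (Q p) = Q (- p)"
  unfolding Abar_def Let_def by (simp add: fclass_neg[OF frepQ])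
lemma Ab_zer: "zer Ab = Q 0" unfolding Abar_def Let_def by simp
lemma Ab_one: "one Ab = Q 1" unfolding Abar_def Let_def by (simp add: fone_eq)
lemma Ab_smul: "smul Ab c (Q p) = Q (Poly_Mapping.single [] c * p)"
  unfolding Abar_def Let_def by (simp add: fclass_mul[OF HOL.refl frepQ] fscal_eq)
lemmas Ab_simps = Ab_add Ab_mul Ab_neg Ab_zer Ab_one Ab_smul

lemma iotaQ: "iota A e i j a = Q (X a)" "iota A e j i a = Q (X a)"
  by (simp_all add: iota_def X_def rels_ji)
lemma munitQ: "munit A e i j p q = Q (E p q)" "munit A e j i p q = Q (E p q)"
  by (simp_all add: munit_def E_def rels_ji)
lemma fepsQ: "feps A e i j = Q eps1" "feps A e j i = Q eps2"
  by (simp_all add: feps_def sub_def Ab_ji iotaQ Ab_simps eps1_def eps2_def)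

lemma F_car: "car F1 = {Q (eps1 * p * eps1) | p. True}" "car F2 = {Q (eps2 * p * eps2) | p. True}"
proof -
  have "\<And>ep. {mul Ab (Q ep) (mul Ab x (Q ep)) | x. x \<in> range Q} = {Q (ep * p * ep) | p. True}"
  proof (intro equalityI subsetI)
    fix ep y assume "y \<in> {mul Ab (Q ep) (mul Ab x (Q ep)) | x. x \<in> range Q}"
    thus "y \<in> {Q (ep * p * ep) | p. True}" by (auto simp: Ab_mul mult.assoc)
  next
    fix ep y assume "y \<in> {Q (ep * p * ep) | p. True}"
    then obtain p where "y = Q (ep * p * ep)" by auto
    hence "y = mul Ab (Q ep) (mul Ab (Q p) (Q ep))" by (simp add: Ab_mul mult.assoc)
    thus "y \<in> {mul Ab (Q ep) (mul Ab x (Q ep)) | x. x \<in> range Q}" by blast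
  qed
  thus "car F1 = {Q (eps1 * p * eps1) | p. True}" "car F2 = {Q (eps2 * p * eps2) | p. True}"
    unfolding fusion_def Let_def Ab_ji fepsQ Ab_car by simp_all
qed
lemma F_ops:
  "add F1 = add Ab" "mul F1 = mul Ab" "neg F1 = neg Ab" "zer F1 = zer Ab" "smul F1 = smul Ab"
  "add F2 = add Ab" "mul F2 = mul Ab" "neg F2 = neg Ab" "zer F2 = zer Ab" "smul F2 = smul Ab"
  "one F1 = Q eps1" "one F2 = Q eps2"
  unfolding fusion_def Let_def Ab_ji fepsQ by simp_all

lemma U2b: "eps1 * U - U * eps2 \<in> J"
  by (simp add: rs) (blast intro: Jr)


end

context fz begin
definition phi :: "('a, 'i, 'k) fbar set \<Rightarrow> ('a, 'i, 'k) fbar set" where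
  "phi x = mul Ab (Q U) (mul Ab x (Q U))"

lemma phiQ: "phi (Q p) = Q (U * p * U)" by (simp add: phi_def Ab_mul mult.assoc)

lemma central: "Poly_Mapping.single [] c * p = p * Poly_Mapping.single [] (c::'k)"
proof -
  have "Poly_Mapping.single [] c * p = (\<Sum>u\<in>Poly_Mapping.keys p. Poly_Mapping.single [] c * Poly_Mapping.single u (Poly_Mapping.lookup p u))"
    by (subst pm_expand[of p]) (simp add: sum_distrib_left)
  also have "\<dots> = (\<Sum>u\<in>Poly_Mapping.keys p. Poly_Mapping.single u (Poly_Mapping.lookup p u) * Poly_Mapping.single [] c)"
    by (simp add: mult_single nil0 mult.commute)
  also have "\<dots> = p * Poly_Mapping.single [] c"
    by (subst (2) pm_expand[of p]) (simp add: sum_distrib_right)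
  finally show ?thesis .
qed

lemma UU_cancel: "U * (U * p * U) * U - p \<in> J"
proof -
  have "(U * U) * p * (U * U) - 1 * p * 1 \<in> J" by (intro eqv_mul U1 eqv_refl)
  thus ?thesis by (simp add: mult.assoc)
qed

lemma phi_phi: "x \<in> car Ab \<Longrightarrow> phi (phi x) = x"
proof -
  assume "x \<in> car Ab"
  then obtain p where x: "x = Q p" unfolding Ab_car by blast
  show ?thesis unfolding x phiQ by (rule QeqI[OF UU_cancel])
qed

lemma phi_F12: "x \<in> car F1 \<Longrightarrow> phi x \<in> car F2"
proof -
  assume "x \<in> car F1"
  then obtain p where x: "x = Q (eps1 * p * eps1)" unfolding F_car by blast
  have "(U * eps1) * p * (eps1 * U) - (eps2 * U) * p * (U * eps2) \<in> J"
    by (intro eqv_mul U2 U2b eqv_refl)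
  hence "phi x = Q (eps2 * (U * p * U) * eps2)" unfolding x phiQ by (intro QeqI) (simp add: mult.assoc)
  thus ?thesis unfolding F_car by blast
qed

lemma phi_F21: "x \<in> car F2 \<Longrightarrow> phi x \<in> car F1"
proof -
  assume "x \<in> car F2"
  then obtain p where x: "x = Q (eps2 * p * eps2)" unfolding F_car by blast
  have "(U * eps2) * p * (eps2 * U) - (eps1 * U) * p * (U * eps1) \<in> J"
    by (intro eqv_mul eqv_sym[OF U2] eqv_sym[OF U2b] eqv_refl)
  hence "phi x = Q (eps1 * (U * p * U) * eps1)" unfolding x phiQ by (intro QeqI) (simp add: mult.assoc)
  thus ?thesis unfolding F_car by blast
qed

lemma F1_sub: "car F1 \<subseteq> car Ab" and F2_sub: "car F2 \<subseteq> car Ab"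
  unfolding F_car Ab_car by blast+

lemma phi_one: "phi (one F1) = one F2"
proof -
  have "(U * eps1) * U - (eps2 * U) * U \<in> J" by (intro eqv_mul U2 eqv_refl)
  moreover have "eps2 * (U * U) - eps2 * 1 \<in> J" by (intro eqv_mul U1 eqv_refl)
  ultimately have "U * eps1 * U - eps2 \<in> J" using eqv_trans by (simp add: mult.assoc)
  thus ?thesis unfolding F_ops phiQ by (rule QeqI)
qed

lemma phi_add: "phi (add Ab (Q p) (Q q)) = add Ab (phi (Q p)) (phi (Q q))"
  unfolding Ab_simps phiQ by (simp add: distrib_left distrib_right)

lemma phi_mul: "phi (mul Ab (Q p) (Q q)) = mul Ab (phi (Q p)) (phi (Q q))"
proof -
  have "(U * p) * 1 * (q * U) - (U * p) * (U * U) * (q * U) \<in> J" by (intro eqv_mul eqv_refl eqv_sym[OF U1])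
  thus ?thesis unfolding Ab_simps phiQ by (intro QeqI) (simp add: mult.assoc)
qed

lemma phi_smul: "phi (smul Ab c (Q p)) = smul Ab c (phi (Q p))"
proof -
  have "U * (Poly_Mapping.single [] c * p) * U = Poly_Mapping.single [] c * (U * p * U)"
  proof -
    have "U * Poly_Mapping.single [] c = Poly_Mapping.single [] c * U" by (rule central[symmetric])
    hence "U * (Poly_Mapping.single [] c * p) * U = (Poly_Mapping.single [] c * U) * p * U"
      by (simp only: mult.assoc[symmetric])
    thus ?thesis by (simp only: mult.assoc)
  qed
  thus ?thesis unfolding Ab_simps phiQ by simp
qed

lemma phi_iso: "alg_iso F1 F2 phi"
  unfolding alg_iso_def
proof (intro conjI)
  show "bij_betw phi (car F1) (car F2)"
  proof (rule bij_betw_byWitness[where f'=phi])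
    show "\<forall>a\<in>car F1. phi (phi a) = a" using phi_phi F1_sub by blast
    show "\<forall>a\<in>car F2. phi (phi a) = a" using phi_phi F2_sub by blast
    show "phi ` car F1 \<subseteq> car F2" using phi_F12 by blast
    show "phi ` car F2 \<subseteq> car F1" using phi_F21 by blast
  qed
  show "phi (one F1) = one F2" by (rule phi_one)
  show "\<forall>x\<in>car F1. \<forall>y\<in>car F1. phi (add F1 x y) = add F2 (phi x) (phi y) \<and> phi (mul F1 x y) = mul F2 (phi x) (phi y)"
  proof (intro ballI)
    fix x y assume "x \<in> car F1" "y \<in> car F1"
    hence "x \<in> range Q" "y \<in> range Q" using F1_sub Ab_car by auto
    then obtain p q where x: "x = Q p" and y: "y = Q q" by auto
    show "phi (add F1 x y) = add F2 (phi x) (phi y) \<and> phi (mul F1 x y) = mul F2 (phi x) (phi y)"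
      unfolding x y F_ops using phi_add phi_mul by blast
  qed
  show "\<forall>c. \<forall>x\<in>car F1. phi (smul F1 c x) = smul F2 c (phi x)"
  proof (intro allI ballI)
    fix c x assume "x \<in> car F1"
    hence "x \<in> range Q" using F1_sub Ab_car by auto
    then obtain p where x: "x = Q p" by auto
    show "phi (smul F1 c x) = smul F2 c (phi x)" unfolding x F_ops by (rule phi_smul)
  qed
qed

lemma fpi1: "fpi A e i j a = Q (eps1 * X a * eps1 + E i j * X a * E j i + E i j * X a * eps1 + eps1 * X a * E j i)"
  unfolding fpi_def Let_def fepsQ iotaQ munitQ Ab_simps by (simp add: mult.assoc add.assoc)
lemma fpi2: "fpi A e j i a = Q (eps2 * X a * eps2 + E j i * X a * E i j + E j i * X a * eps2 + eps2 * X a * E i j)"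
  unfolding fpi_def Let_def fepsQ iotaQ munitQ Ab_ji Ab_simps by (simp add: mult.assoc add.assoc)

lemma phi_fpi: "phi (fpi A e i j a) = fpi A e j i a"
  unfolding fpi1 fpi2 phiQ by (rule QeqI[OF U3])

end

datatype blk = B1 | B2 | B3

lemma UNIV_blk: "(UNIV :: blk set) = {B1, B2, B3}" using blk.exhaust by blast
instance blk :: finite by standard (simp add: UNIV_blk)

context fz begin

definition cf :: "blk \<Rightarrow> 'i \<Rightarrow> 'k" where
  "cf b = (\<lambda>s. case b of B1 \<Rightarrow> if s = i then 1 else 0 | B2 \<Rightarrow> if s = j then 1 else 0
                        | B3 \<Rightarrow> if s = i \<or> s = j then 0 else 1)"
definition dA :: "blk \<Rightarrow> 'a" where "dA b = lincomb A e (cf b) I"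
definition DF :: "blk \<Rightarrow> ('a, 'i, 'k) fbar" where
  "DF b = (case b of B1 \<Rightarrow> E i i | B2 \<Rightarrow> E j j | B3 \<Rightarrow> 1 - E i i - E j j)"

lemma dA_car: "dA b \<in> car A" by (simp add: dA_def lc_car)

lemma dA12: "dA B1 = e i" "dA B2 = e j"
  unfolding dA_def cf_def using lc_ind[of i I] lc_ind[of j I] iI jI dI ij by simp_all

lemma cf01: "cf b s * cf b s = cf b s" by (cases b) (auto simp: cf_def)

lemma lc_zero: "lincomb A e (\<lambda>_. 0) I = zer A"
  using lc_smul[of I 0 "\<lambda>_. 0"] smul0[OF lc_car[of I "\<lambda>_. 0"]] by simp

lemma dA_mul: "mul A (dA b) (dA b') = (if b = b' then dA b else zer A)"
proof -
  have "mul A (dA b) (dA b') = lincomb A e (\<lambda>s. cf b s * cf b' s) I"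
    unfolding dA_def by (rule lc_mul) (simp_all add: dI)
  also have "\<dots> = (if b = b' then dA b else zer A)"
  proof (cases "b = b'")
    case True thus ?thesis by (simp add: cf01 dA_def)
  next
    case False
    hence "(\<lambda>s. cf b s * cf b' s) = (\<lambda>_. 0)" using ij
      by (cases b; cases b') (auto simp: cf_def fun_eq_iff ij ij[symmetric])
    thus ?thesis using False lc_zero by simp
  qed
  finally show ?thesis .
qed

lemma dA_sum: "add A (add A (dA B1) (dA B2)) (dA B3) = one A"
proof -
  have "add A (add A (dA B1) (dA B2)) (dA B3) = lincomb A e (\<lambda>s. (cf B1 s + cf B2 s) + cf B3 s) I"
    unfolding dA_def by (simp add: lc_add)
  also have "\<dots> = lincomb A e (\<lambda>_. 1) I" by (rule lc_cong) (use ij in \<open>auto simp: cf_def\<close>)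
  finally show ?thesis by (simp add: lc1)
qed

definition "c0j = (\<lambda>s. if s = j then 0 else (1::'k))"
definition "c0i = (\<lambda>s. if s = i then 0 else (1::'k))"

lemma sub_one_e: "sub A (one A) (e j) = lincomb A e c0j I" "sub A (one A) (e i) = lincomb A e c0i I"
proof -
  have "sub A (one A) (e j) = add A (lincomb A e (\<lambda>_. 1) I) (lincomb A e (\<lambda>s. - cf B2 s) I)"
    unfolding sub_def lc1 using dA12 lc_neg[of I "cf B2"] by (simp add: dA_def)
  also have "\<dots> = lincomb A e (\<lambda>s. 1 + - cf B2 s) I" by (rule lc_add[symmetric]) simp
  also have "\<dots> = lincomb A e c0j I" by (rule lc_cong) (auto simp: cf_def c0j_def)
  finally show "sub A (one A) (e j) = lincomb A e c0j I" .
  have "sub A (one A) (e i) = add A (lincomb A e (\<lambda>_. 1) I) (lincomb A e (\<lambda>s. - cf B1 s) I)"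
    unfolding sub_def lc1 using dA12 lc_neg[of I "cf B1"] by (simp add: dA_def)
  also have "\<dots> = lincomb A e (\<lambda>s. 1 + - cf B1 s) I" by (rule lc_add[symmetric]) simp
  also have "\<dots> = lincomb A e c0i I" by (rule lc_cong) (auto simp: cf_def c0i_def)
  finally show "sub A (one A) (e i) = lincomb A e c0i I" .
qed

lemma lc_absorb: "(\<And>s. c s * cf b s = cf b s) \<Longrightarrow> mul A (lincomb A e c I) (dA b) = dA b"
  "(\<And>s. c s * cf b s = cf b s) \<Longrightarrow> mul A (dA b) (lincomb A e c I) = dA b"
proof -
  assume h: "\<And>s. c s * cf b s = cf b s"
  hence h': "(\<lambda>s. c s * cf b s) = cf b" "(\<lambda>s. cf b s * c s) = cf b" by (auto simp: fun_eq_iff mult.commute)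
  show "mul A (lincomb A e c I) (dA b) = dA b" unfolding dA_def by (simp add: lc_mul dI h'(1))
  show "mul A (dA b) (lincomb A e c I) = dA b" unfolding dA_def by (simp add: lc_mul dI h'(2))
qed

lemma c0_absorb: "b \<noteq> B2 \<Longrightarrow> mul A (lincomb A e c0j I) (dA b) = dA b"
  "b \<noteq> B1 \<Longrightarrow> mul A (lincomb A e c0i I) (dA b) = dA b"
  "b \<noteq> B2 \<Longrightarrow> mul A (dA b) (lincomb A e c0j I) = dA b"
  "b \<noteq> B1 \<Longrightarrow> mul A (dA b) (lincomb A e c0i I) = dA b"
  by (rule lc_absorb; cases b; auto simp: cf_def c0j_def c0i_def ij ij[symmetric])+

lemma X_zer: "X (zer A) \<in> J"
proof -
  have "X (add A (zer A) (zer A)) - (X (zer A) + X (zer A)) \<in> J" using RA_J[of "zer A" "zer A"] cl by (simp add: RA_def)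
  hence "- X (zer A) \<in> J" using ax(6)[of "zer A"] cl by simp
  from J_intros(3)[OF this] show ?thesis by simp
qed

lemma X_mulJ: "a \<in> car A \<Longrightarrow> b \<in> car A \<Longrightarrow> X (mul A a b) - X a * X b \<in> J" by (rule RX_J0)
lemma X_addJ: "a \<in> car A \<Longrightarrow> b \<in> car A \<Longrightarrow> X (add A a b) - (X a + X b) \<in> J" using RA_J by (simp add: RA_def)

lemma XdA: "X (dA b) - DF b \<in> J"
proof (cases b)
  case B1 thus ?thesis using RD_J[of i] by (simp add: dA12 DF_def RD_def eqv_sym)
next
  case B2 thus ?thesis using RD_J[of j] by (simp add: dA12 DF_def RD_def eqv_sym)
next
  case B3
  have "X (add A (add A (dA B1) (dA B2)) (dA B3)) - ((X (dA B1) + X (dA B2)) + X (dA B3)) \<in> J"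
    by (rule eqv_trans[OF X_addJ eqv_add[OF X_addJ eqv_refl]]) (simp_all add: dA_car cl)
  hence "X (one A) - ((X (dA B1) + X (dA B2)) + X (dA B3)) \<in> J" by (simp add: dA_sum)
  hence "1 - ((X (dA B1) + X (dA B2)) + X (dA B3)) \<in> J" by (rule eqv_trans[OF eqv_sym[OF R1_J]])
  moreover have "X (dA B1) - E i i \<in> J" "X (dA B2) - E j j \<in> J"
    using RD_J[of i] RD_J[of j] by (simp_all add: dA12 RD_def eqv_sym)
  ultimately have "1 - ((E i i + E j j) + X (dA B3)) \<in> J"
    by (meson eqv_add eqv_refl eqv_trans)
  hence "(1 - ((E i i + E j j) + X (dA B3))) * (-1) \<in> J" by (rule J_intros(5))
  thus ?thesis using B3 by (simp add: DF_def algebra_simps)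
qed

lemma DF_sum: "DF B1 + DF B2 + DF B3 = 1" by (simp add: DF_def)

lemma X_left: "a \<in> car A \<Longrightarrow> mul A (dA b) a = a \<Longrightarrow> X a - DF b * X a \<in> J"
  using eqv_trans[OF X_mulJ[OF dA_car, of a b] eqv_mul[OF XdA eqv_refl]] by simp
lemma X_right: "a \<in> car A \<Longrightarrow> mul A a (dA c) = a \<Longrightarrow> X a - X a * DF c \<in> J"
  using eqv_trans[OF X_mulJ[OF _ dA_car, of a c] eqv_mul[OF eqv_refl XdA]] by simp
lemma X_sand: "a \<in> car A \<Longrightarrow> X (mul A (dA b) (mul A a (dA c))) - DF b * X a * DF c \<in> J"
proof -
  assume a: "a \<in> car A"
  have "X (mul A (dA b) (mul A a (dA c))) - X (dA b) * X (mul A a (dA c)) \<in> J" by (rule X_mulJ) (simp_all add: dA_car cl a)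
  moreover have "X (dA b) * X (mul A a (dA c)) - DF b * (X a * DF c) \<in> J"
    by (intro eqv_mul XdA eqv_trans[OF X_mulJ[OF a dA_car] eqv_mul[OF eqv_refl XdA]])
  ultimately show ?thesis by (simp add: eqv_trans mult.assoc)
qed

definition "lf1 b = (b = B2)"
definition "lf2 b = (b = B1)"
definition "Lf1 l = (if l then E i j else eps1)"
definition "Rf1 r = (if r then E j i else eps1)"
definition "Lf2 l = (if l then E j i else eps2)"
definition "Rf2 r = (if r then E i j else eps2)"

lemmas rs2 = rs DF_def Lf1_def Rf1_def Lf2_def Rf2_def lf1_def lf2_def

lemma M1: "U * Lf1 (lf1 b) * DF b - Lf2 (lf2 b) * DF b \<in> J"
  by (cases b; simp add: rs2; blast intro: Jr)
lemma M2: "DF c * Rf1 (lf1 c) * U - DF c * Rf2 (lf2 c) \<in> J"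
  by (cases c; simp add: rs2; blast intro: Jr)
lemma mis1: "l \<noteq> lf1 b \<Longrightarrow> Lf1 l * DF b \<in> J"
  by (cases b; cases l; simp add: rs2; blast intro: Jr)
lemma mis2: "r \<noteq> lf1 c \<Longrightarrow> DF c * Rf1 r \<in> J"
  by (cases c; cases r; simp add: rs2; blast intro: Jr)

end

context fz begin

definition "g1 s t p = Q (Lf1 (lf1 s) * X p * Rf1 (lf1 t))"
definition "g2 s t p = Q (Lf2 (lf2 s) * X p * Rf2 (lf2 t))"
definition "blockc s t a \<longleftrightarrow> a \<in> car A \<and> mul A (dA s) a = a \<and> mul A a (dA t) = a"
definition "Gen1 = {g1 s t a | s t a. blockc s t a}"

lemma eps_L1: "eps1 * Lf1 l - Lf1 l \<in> J" by (cases l; simp add: rs2; blast intro: Jr)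
lemma eps_L2: "Rf1 r * eps1 - Rf1 r \<in> J" by (cases r; simp add: rs2; blast intro: Jr)
lemma eps_L3: "eps2 * Lf2 l - Lf2 l \<in> J" by (cases l; simp add: rs2; blast intro: Jr)
lemma eps_L4: "Rf2 r * eps2 - Rf2 r \<in> J" by (cases r; simp add: rs2; blast intro: Jr)
lemmas eps_L = eps_L1 eps_L2 eps_L3 eps_L4

lemma g1_car: "g1 s t p \<in> car F1"
proof -
  have "eps1 * Lf1 (lf1 s) * X p * (Rf1 (lf1 t) * eps1) - Lf1 (lf1 s) * X p * Rf1 (lf1 t) \<in> J"
    by (intro eqv_mul eps_L eqv_refl)
  from QeqI[OF this] have "g1 s t p = Q (eps1 * (Lf1 (lf1 s) * X p * Rf1 (lf1 t)) * eps1)" unfolding g1_def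
    by (simp add: mult.assoc)
  thus ?thesis unfolding F_car by blast
qed

lemma g2_car: "g2 s t p \<in> car F2"
proof -
  have "eps2 * Lf2 (lf2 s) * X p * (Rf2 (lf2 t) * eps2) - Lf2 (lf2 s) * X p * Rf2 (lf2 t) \<in> J"
    by (intro eqv_mul eps_L eqv_refl)
  from QeqI[OF this] have "g2 s t p = Q (eps2 * (Lf2 (lf2 s) * X p * Rf2 (lf2 t)) * eps2)" unfolding g2_def
    by (simp add: mult.assoc)
  thus ?thesis unfolding F_car by blast
qed

lemma lin_QX: assumes car: "\<And>p. Q (L * X p * R) \<in> car F"
  and ops: "add F = add Ab" "smul F = smul Ab" "zer F = zer Ab"
  shows "lin A F (\<lambda>p. Q (L * X p * R))"
  unfolding lin_def
proof (intro conjI ballI allI)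
  fix x show "Q (L * X x * R) \<in> car F" by (rule car)
next
  fix x y assume "x \<in> car A" "y \<in> car A"
  hence "L * X (add A x y) * R - L * (X x + X y) * R \<in> J" by (intro eqv_mul eqv_refl X_addJ)
  thus "Q (L * X (add A x y) * R) = add F (Q (L * X x * R)) (Q (L * X y * R))"
    unfolding ops Ab_simps by (intro QeqI) (simp add: algebra_simps)
next
  fix c x assume "x \<in> car A"
  hence "L * X (smul A c x) * R - L * (Poly_Mapping.single [] c * X x) * R \<in> J" by (intro eqv_mul eqv_refl RS_J)
  moreover have "L * (Poly_Mapping.single [] c * X x) * R = Poly_Mapping.single [] c * (L * X x * R)"
  proof -
    have "L * Poly_Mapping.single [] c = Poly_Mapping.single [] c * L" by (rule central[symmetric])
    hence "L * (Poly_Mapping.single [] c * X x) * R = (Poly_Mapping.single [] c * L) * X x * R"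
      by (simp only: mult.assoc[symmetric])
    thus ?thesis by (simp only: mult.assoc)
  qed
  ultimately show "Q (L * X (smul A c x) * R) = smul F c (Q (L * X x * R))"
    unfolding ops Ab_simps by (intro QeqI) simp
next
  have "L * X (zer A) * R \<in> J" by (intro J_intros X_zer)
  thus "Q (L * X (zer A) * R) = zer F" unfolding ops Ab_simps by (intro QeqI) simp
qed

lemma lin_g1: "lin A F1 (g1 s t)"
  unfolding g1_def[abs_def] by (rule lin_QX) (use g1_car[unfolded g1_def] in \<open>simp_all add: F_ops\<close>)
lemma lin_g2: "lin A F2 (g2 s t)"
  unfolding g2_def[abs_def] by (rule lin_QX) (use g2_car[unfolded g2_def] in \<open>simp_all add: F_ops\<close>)

lemma lin_phi: "lin F1 F2 phi"
  unfolding lin_def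
proof (intro conjI ballI allI)
  fix x assume "x \<in> car F1" thus "phi x \<in> car F2" by (rule phi_F12)
next
  fix x y assume "x \<in> car F1" "y \<in> car F1"
  hence "x \<in> range Q" "y \<in> range Q" using F1_sub Ab_car by auto
  then obtain p q where x: "x = Q p" and y: "y = Q q" by auto
  show "phi (add F1 x y) = add F2 (phi x) (phi y)" unfolding x y F_ops by (rule phi_add)
next
  fix c x assume "x \<in> car F1"
  hence "x \<in> range Q" using F1_sub Ab_car by auto
  then obtain p where x: "x = Q p" by auto
  show "phi (smul F1 c x) = smul F2 c (phi x)" unfolding x F_ops by (rule phi_smul)
next
  show "phi (zer F1) = zer F2" unfolding F_ops Ab_simps phiQ by simp
qed

lemma phi_g: assumes "blockc s t p" shows "phi (g1 s t p) = g2 s t p"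
proof -
  have p: "p \<in> car A" "mul A (dA s) p = p" "mul A p (dA t) = p" using assms by (auto simp: blockc_def)
  have Xp: "X p - DF s * X p * DF t \<in> J"
    using eqv_trans[OF X_left[OF p(1,2)] eqv_mul[OF eqv_refl X_right[OF p(1,3)]]] by (simp add: mult.assoc)
  have "U * Lf1 (lf1 s) * X p * (Rf1 (lf1 t) * U) - U * Lf1 (lf1 s) * (DF s * X p * DF t) * (Rf1 (lf1 t) * U) \<in> J"
    by (intro eqv_mul eqv_refl Xp)
  moreover have "(U * Lf1 (lf1 s) * DF s) * X p * (DF t * Rf1 (lf1 t) * U) - (Lf2 (lf2 s) * DF s) * X p * (DF t * Rf2 (lf2 t)) \<in> J"
    by (intro eqv_mul eqv_refl M1 M2)
  moreover have "Lf2 (lf2 s) * (DF s * X p * DF t) * Rf2 (lf2 t) - Lf2 (lf2 s) * X p * Rf2 (lf2 t) \<in> J"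
    by (intro eqv_mul eqv_refl eqv_sym[OF Xp])
  ultimately have "U * (Lf1 (lf1 s) * X p * Rf1 (lf1 t)) * U - Lf2 (lf2 s) * X p * Rf2 (lf2 t) \<in> J"
    by (simp add: mult.assoc) (meson eqv_trans)
  thus ?thesis unfolding g1_def g2_def phiQ by (rule QeqI)
qed

end

locale fzb = fz A e I brA i j for A :: "('k::field, 'a) kalg" and e :: "'i \<Rightarrow> 'a" and I brA and i j :: 'i +
  fixes br1 br2 :: "('a, 'i, 'k) fbar set \<Rightarrow> ('a, 'i, 'k) fbar set \<Rightarrow> (('a, 'i, 'k) fbar set \<times> ('a, 'i, 'k) fbar set) list"
  assumes IB1: "induced_bracket A e I i j brA br1" and IB2: "induced_bracket A e I j i brA br2"
begin

definition "gg1 l r p = Q (Lf1 l * X p * Rf1 r)"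
definition "gg2 l r p = Q (Lf2 l * X p * Rf2 r)"

lemma g_gg: "g1 s t = gg1 (lf1 s) (lf1 t)" "g2 s t = gg2 (lf2 s) (lf2 t)"
  by (simp_all add: fun_eq_iff g1_def gg1_def g2_def gg2_def)

lemma DB1: "dbl_bracket F1 (fus_idem A e i j) (fus_index I j) br1"
  and DB2: "dbl_bracket F2 (fus_idem A e j i) (fus_index I i) br2"
  using IB1 IB2 unfolding induced_bracket_def Let_def by blast+

lemma br1_gen0:
  assumes "a \<in> car A" "b \<in> car A"
    "mul A (if la then e j else sub A (one A) (e j)) a = a" "mul A a (if ra then e j else sub A (one A) (e j)) = a"
    "mul A (if lb then e j else sub A (one A) (e j)) b = b" "mul A b (if rb then e j else sub A (one A) (e j)) = b"
  shows "tens_eq F1 (br1 (gg1 la ra a) (gg1 lb rb b)) (pmap (gg1 lb ra) (gg1 la rb) (brA a b))"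
proof -
  have L: "\<And>l. (if l then munit A e i j i j else feps A e i j) = Q (Lf1 l)"
    and R: "\<And>r. (if r then munit A e i j j i else feps A e i j) = Q (Rf1 r)"
    by (simp_all add: Lf1_def Rf1_def munitQ fepsQ)
  have G: "\<And>l r p. mul Ab (Q (Lf1 l)) (mul Ab (iota A e i j p) (Q (Rf1 r))) = gg1 l r p"
    by (simp add: gg1_def iotaQ Ab_simps mult.assoc)
  have "tens_eq F1 (br1 (gg1 la ra a) (gg1 lb rb b))
          (map (\<lambda>(p, q). (gg1 lb ra p, gg1 la rb q)) (brA a b))"
    using IB1 assms unfolding induced_bracket_def Let_def L R G by blast
  thus ?thesis by (simp add: pmap_def)
qed

lemma br2_gen0:
  assumes "a \<in> car A" "b \<in> car A"
    "mul A (if la then e i else sub A (one A) (e i)) a = a" "mul A a (if ra then e i else sub A (one A) (e i)) = a"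
    "mul A (if lb then e i else sub A (one A) (e i)) b = b" "mul A b (if rb then e i else sub A (one A) (e i)) = b"
  shows "tens_eq F2 (br2 (gg2 la ra a) (gg2 lb rb b)) (pmap (gg2 lb ra) (gg2 la rb) (brA a b))"
proof -
  have L: "\<And>l. (if l then munit A e j i j i else feps A e j i) = Q (Lf2 l)"
    and R: "\<And>r. (if r then munit A e j i i j else feps A e j i) = Q (Rf2 r)"
    by (simp_all add: Lf2_def Rf2_def munitQ fepsQ)
  have G: "\<And>l r p. mul (Abar A e j i) (Q (Lf2 l)) (mul (Abar A e j i) (iota A e j i p) (Q (Rf2 r))) = gg2 l r p"
    by (simp add: gg2_def iotaQ Ab_ji Ab_simps mult.assoc)
  have "tens_eq F2 (br2 (gg2 la ra a) (gg2 lb rb b))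
          (map (\<lambda>(p, q). (gg2 lb ra p, gg2 la rb q)) (brA a b))"
    using IB2 assms unfolding induced_bracket_def Let_def L R G by blast
  thus ?thesis by (simp add: pmap_def)
qed

lemma blk_cA1: "blockc s t a \<Longrightarrow> mul A (if lf1 s then e j else sub A (one A) (e j)) a = a \<and>
    mul A a (if lf1 t then e j else sub A (one A) (e j)) = a"
proof -
  assume "blockc s t a"
  hence a: "a \<in> car A" "mul A (dA s) a = a" "mul A a (dA t) = a" by (auto simp: blockc_def)
  have "mul A (if lf1 s then e j else sub A (one A) (e j)) a = a"
  proof (cases "s = B2")
    case True thus ?thesis using a by (simp add: lf1_def dA12)
  next
    case False
    have "mul A (lincomb A e c0j I) (mul A (dA s) a) = mul A (mul A (lincomb A e c0j I) (dA s)) a"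
      using a by (simp add: ax(2) lc_car dA_car)
    thus ?thesis using False a by (simp add: lf1_def sub_one_e c0_absorb)
  qed
  moreover have "mul A a (if lf1 t then e j else sub A (one A) (e j)) = a"
  proof (cases "t = B2")
    case True thus ?thesis using a by (simp add: lf1_def dA12)
  next
    case False
    have "mul A a (lincomb A e c0j I) = mul A a (mul A (dA t) (lincomb A e c0j I))"
      using ax(2)[of a "dA t" "lincomb A e c0j I"] a by (simp add: lc_car dA_car)
    thus ?thesis using False a by (simp add: lf1_def sub_one_e c0_absorb)
  qed
  ultimately show ?thesis by blast
qed

lemma blk_cA2: "blockc s t a \<Longrightarrow> mul A (if lf2 s then e i else sub A (one A) (e i)) a = a \<and>
    mul A a (if lf2 t then e i else sub A (one A) (e i)) = a"
proof -
  assume "blockc s t a"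
  hence a: "a \<in> car A" "mul A (dA s) a = a" "mul A a (dA t) = a" by (auto simp: blockc_def)
  have "mul A (if lf2 s then e i else sub A (one A) (e i)) a = a"
  proof (cases "s = B1")
    case True thus ?thesis using a by (simp add: lf2_def dA12)
  next
    case False
    have "mul A (lincomb A e c0i I) (mul A (dA s) a) = mul A (mul A (lincomb A e c0i I) (dA s)) a"
      using a by (simp add: ax(2) lc_car dA_car)
    thus ?thesis using False a by (simp add: lf2_def sub_one_e c0_absorb)
  qed
  moreover have "mul A a (if lf2 t then e i else sub A (one A) (e i)) = a"
  proof (cases "t = B1")
    case True thus ?thesis using a by (simp add: lf2_def dA12)
  next
    case False
    have "mul A a (lincomb A e c0i I) = mul A a (mul A (dA t) (lincomb A e c0i I))"
      using ax(2)[of a "dA t" "lincomb A e c0i I"] a by (simp add: lc_car dA_car)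
    thus ?thesis using False a by (simp add: lf2_def sub_one_e c0_absorb)
  qed
  ultimately show ?thesis by blast
qed

lemma br1_gen: "blockc s t a \<Longrightarrow> blockc s' t' b \<Longrightarrow>
   tens_eq F1 (br1 (g1 s t a) (g1 s' t' b)) (pmap (g1 s' t) (g1 s t') (brA a b))"
  unfolding g_gg using blk_cA1[of s t a] blk_cA1[of s' t' b]
  by (intro br1_gen0) (auto simp: blockc_def)

lemma br2_gen: "blockc s t a \<Longrightarrow> blockc s' t' b \<Longrightarrow>
   tens_eq F2 (br2 (g2 s t a) (g2 s' t' b)) (pmap (g2 s' t) (g2 s t') (brA a b))"
  unfolding g_gg using blk_cA2[of s t a] blk_cA2[of s' t' b]
  by (intro br2_gen0) (auto simp: blockc_def)

definition "pr s t p = mul A (dA s) (mul A p (dA t))"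

lemma blockc_pr: "p \<in> car A \<Longrightarrow> blockc s t (pr s t p)"
proof -
  assume p: "p \<in> car A"
  have c: "dA s \<in> car A" "dA t \<in> car A" "mul A p (dA t) \<in> car A" using p by (simp_all add: dA_car cl)
  have "mul A (dA s) (pr s t p) = mul A (mul A (dA s) (dA s)) (mul A p (dA t))"
    unfolding pr_def using c by (simp add: ax(2))
  moreover have "mul A (pr s t p) (dA t) = mul A (dA s) (mul A p (mul A (dA t) (dA t)))"
    unfolding pr_def using c p by (simp add: ax(2))
  ultimately show ?thesis unfolding blockc_def using c by (simp add: dA_mul pr_def cl)
qed

lemma brA_proj: "blockc s t a \<Longrightarrow> blockc s' t' b \<Longrightarrow>
   tens_eq A (brA a b) (pmap (pr s' t) (pr s t') (brA a b))"
  unfolding blockc_def pr_def[abs_def] by (rule proj4[OF dA_def dA_def dA_def dA_def]) auto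

lemma P_gen: assumes ab: "blockc s t a" "blockc s' t' b"
  shows "tens_eq F2 (br2 (phi (g1 s t a)) (phi (g1 s' t' b))) (tmap phi (br1 (g1 s t a) (g1 s' t' b)))"
proof -
  have a: "a \<in> car A" and b: "b \<in> car A" using ab by (auto simp: blockc_def)
  have "br2 (phi (g1 s t a)) (phi (g1 s' t' b)) = br2 (g2 s t a) (g2 s' t' b)" using ab by (simp add: phi_g)
  also have "tens_eq F2 \<dots> (pmap (g2 s' t) (g2 s t') (brA a b))" by (rule br2_gen[OF ab])
  also have "tens_eq F2 \<dots> (pmap (g2 s' t) (g2 s t') (pmap (pr s' t) (pr s t') (brA a b)))"
    by (rule tens_transport[OF brA_proj[OF ab] lin_g2 lin_g2])
  also have "\<dots> = pmap phi phi (pmap (g1 s' t) (g1 s t') (pmap (pr s' t) (pr s t') (brA a b)))"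
    unfolding pmap_comp by (rule pmap_cong) (use br_car[OF a b] in \<open>auto simp: phi_g blockc_pr\<close>)
  also have "tens_eq F2 \<dots> (pmap phi phi (pmap (g1 s' t) (g1 s t') (brA a b)))"
    by (rule tens_transport[OF tens_eq.sym[OF tens_transport[OF brA_proj[OF ab] lin_g1 lin_g1]] lin_phi lin_phi])
  also have "tens_eq F2 \<dots> (pmap phi phi (br1 (g1 s t a) (g1 s' t' b)))"
    by (rule tens_transport[OF tens_eq.sym[OF br1_gen[OF ab]] lin_phi lin_phi])
  finally show ?thesis by (simp add: tmap_pmap)
qed

end

lemma tswap_cong':
  assumes s0: "\<And>y. y \<in> car K \<Longrightarrow> smul K 0 y = zer K"
  shows "tens_eq K t u \<Longrightarrow> tens_eq K (tswap t) (tswap u)"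
proof (induction rule: tens_eq.induct)
  case (refl t) thus ?case by (rule tens_eq.refl)
next
  case (sym t u) thus ?case by (blast intro: tens_eq.sym)
next
  case (trans t u v) thus ?case by (blast intro: tens_eq.trans)
next
  case (app t t' u u') thus ?case by (simp add: tswap_def tens_eq.app)
next
  case (swap t u) thus ?case by (simp add: tswap_def tens_eq.swap)
next
  case (addl x x' y) thus ?case by (auto simp: tswap_def intro: tens_eq.addr)
next
  case (addr x y y') thus ?case by (auto simp: tswap_def intro: tens_eq.addl)
next
  case (scal x y c) thus ?case by (auto simp: tswap_def intro: tens_eq.scal tens_eq.sym)
next
  case (zero y)
  have "tens_eq K [] [(smul K 0 y, y)]" using zero tens_eq.zero[OF zero] by (simp add: s0)
  also have "tens_eq K [(smul K 0 y, y)] [(y, smul K 0 y)]" by (rule tens_eq.scal[OF zero zero])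
  finally show ?case using zero by (simp add: s0 tswap_def)
qed

context fzb begin

lemma sc_central: "Poly_Mapping.single [] c * (ep * p * ep) = ep * (Poly_Mapping.single [] c * p) * (ep :: ('a, 'i, 'k) fbar)"
proof -
  have "Poly_Mapping.single [] c * ep = ep * Poly_Mapping.single [] c" by (rule central)
  hence "Poly_Mapping.single [] c * (ep * p * ep) = ep * Poly_Mapping.single [] c * p * ep"
    by (simp only: mult.assoc[symmetric])
  thus ?thesis by (simp only: mult.assoc)
qed


lemma eps11: "eps1 * eps1 - eps1 \<in> J" "eps2 * eps2 - eps2 \<in> J"
  by (simp add: rs; blast intro: Jr)+

lemma F1_elem: "x \<in> car F1 \<Longrightarrow> \<exists>p. x = Q (eps1 * p * eps1)" unfolding F_car by blast
lemma F2_elem: "x \<in> car F2 \<Longrightarrow> \<exists>p. x = Q (eps2 * p * eps2)" unfolding F_car by blast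
lemma F1_I: "Q (eps1 * p * eps1) \<in> car F1" unfolding F_car by blast
lemma F2_I: "Q (eps2 * p * eps2) \<in> car F2" unfolding F_car by blast

lemma F_closed:
  "x \<in> car F1 \<Longrightarrow> y \<in> car F1 \<Longrightarrow> add F1 x y \<in> car F1"
  "x \<in> car F1 \<Longrightarrow> y \<in> car F1 \<Longrightarrow> mul F1 x y \<in> car F1"
  "x \<in> car F1 \<Longrightarrow> smul F1 c x \<in> car F1"
  "x \<in> car F1 \<Longrightarrow> neg F1 x \<in> car F1"
  "x \<in> car F2 \<Longrightarrow> y \<in> car F2 \<Longrightarrow> add F2 x y \<in> car F2"
  "x \<in> car F2 \<Longrightarrow> y \<in> car F2 \<Longrightarrow> mul F2 x y \<in> car F2"
  "x \<in> car F2 \<Longrightarrow> smul F2 c x \<in> car F2"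
  "x \<in> car F2 \<Longrightarrow> neg F2 x \<in> car F2"
  "one F1 \<in> car F1" "zer F1 \<in> car F1" "one F2 \<in> car F2" "zer F2 \<in> car F2"
proof -
  note sc = sc_central
  { fix x y assume "x \<in> car F1" "y \<in> car F1"
    then obtain p q where x: "x = Q (eps1 * p * eps1)" and y: "y = Q (eps1 * q * eps1)" using F1_elem by blast
    show "add F1 x y \<in> car F1" unfolding x y F_ops Ab_simps using F1_I[of "p + q"] by (simp add: algebra_simps)
    show "mul F1 x y \<in> car F1" unfolding x y F_ops Ab_simps using F1_I[of "p * eps1 * eps1 * q"] by (simp add: mult.assoc) }
  { fix x y assume "x \<in> car F2" "y \<in> car F2"
    then obtain p q where x: "x = Q (eps2 * p * eps2)" and y: "y = Q (eps2 * q * eps2)" using F2_elem by blast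
    show "add F2 x y \<in> car F2" unfolding x y F_ops Ab_simps using F2_I[of "p + q"] by (simp add: algebra_simps)
    show "mul F2 x y \<in> car F2" unfolding x y F_ops Ab_simps using F2_I[of "p * eps2 * eps2 * q"] by (simp add: mult.assoc) }
  { fix x assume "x \<in> car F1"
    then obtain p where x: "x = Q (eps1 * p * eps1)" using F1_elem by blast
    show "smul F1 c x \<in> car F1" unfolding x F_ops Ab_simps sc by (rule F1_I)
    show "neg F1 x \<in> car F1" unfolding x F_ops Ab_simps using F1_I[of "- p"] by simp }
  { fix x assume "x \<in> car F2"
    then obtain p where x: "x = Q (eps2 * p * eps2)" using F2_elem by blast
    show "smul F2 c x \<in> car F2" unfolding x F_ops Ab_simps sc by (rule F2_I)
    show "neg F2 x \<in> car F2" unfolding x F_ops Ab_simps using F2_I[of "- p"] by simp }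
  have "Q eps1 = Q (eps1 * 1 * eps1)" by (rule QeqI) (use eqv_sym[OF eps11(1)] in simp)
  thus "one F1 \<in> car F1" unfolding F_ops using F1_I by metis
  have "Q eps2 = Q (eps2 * 1 * eps2)" by (rule QeqI) (use eqv_sym[OF eps11(2)] in simp)
  thus "one F2 \<in> car F2" unfolding F_ops using F2_I by metis
  show "zer F1 \<in> car F1" unfolding F_ops Ab_simps using F1_I[of 0] by simp
  show "zer F2 \<in> car F2" unfolding F_ops Ab_simps using F2_I[of 0] by simp
qed

lemma s_comm: "Poly_Mapping.single [] c * (Poly_Mapping.single [] d * p) = Poly_Mapping.single [] d * (Poly_Mapping.single [] c * (p::('a, 'i, 'k) fbar))"
  by (simp add: mult.assoc[symmetric] mult_single mult.commute)

lemma F2_Q: "x \<in> car F2 \<Longrightarrow> \<exists>p. x = Q p"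
proof -
  assume "x \<in> car F2"
  then obtain p where "x = Q (eps2 * p * eps2)" using F2_elem by blast
  thus ?thesis by (rule exI)
qed
lemma F1_Q: "x \<in> car F1 \<Longrightarrow> \<exists>p. x = Q p"
proof -
  assume "x \<in> car F1"
  then obtain p where "x = Q (eps1 * p * eps1)" using F1_elem by blast
  thus ?thesis by (rule exI)
qed

lemma lin_F2r: assumes b: "b \<in> car F2" shows "lin F2 F2 (\<lambda>w. mul F2 w b)"
proof -
  obtain r where b': "b = Q r" using F2_Q[OF b] by (elim exE)
  show ?thesis unfolding lin_def
  proof (intro conjI ballI allI)
    fix x assume "x \<in> car F2" thus "mul F2 x b \<in> car F2" using b by (rule F_closed(6))
  next
    fix x y assume "x \<in> car F2" "y \<in> car F2"
    then obtain p q where x: "x = Q p" and y: "y = Q q" using F2_Q by (meson exE)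
    show "mul F2 (add F2 x y) b = add F2 (mul F2 x b) (mul F2 y b)" unfolding x y b' F_ops Ab_simps
      by (simp only: distrib_right)
  next
    fix c x assume "x \<in> car F2"
    then obtain p where x: "x = Q p" using F2_Q by (meson exE)
    show "mul F2 (smul F2 c x) b = smul F2 c (mul F2 x b)" unfolding x b' F_ops Ab_simps
      by (simp only: mult.assoc)
  next
    show "mul F2 (zer F2) b = zer F2" unfolding b' F_ops Ab_simps by simp
  qed
qed

lemma lin_F2l: assumes a: "a \<in> car F2" shows "lin F2 F2 (mul F2 a)"
proof -
  obtain r where a': "a = Q r" using F2_Q[OF a] by (elim exE)
  show ?thesis unfolding lin_def
  proof (intro conjI ballI allI)
    fix x assume "x \<in> car F2" with a show "mul F2 a x \<in> car F2" by (rule F_closed(6))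
  next
    fix x y assume "x \<in> car F2" "y \<in> car F2"
    then obtain p q where x: "x = Q p" and y: "y = Q q" using F2_Q by (meson exE)
    show "mul F2 a (add F2 x y) = add F2 (mul F2 a x) (mul F2 a y)" unfolding x y a' F_ops Ab_simps
      by (simp only: distrib_left)
  next
    fix c x assume "x \<in> car F2"
    then obtain p where x: "x = Q p" using F2_Q by (meson exE)
    have "r * (Poly_Mapping.single [] c * p) = Poly_Mapping.single [] c * (r * p)"
    proof -
      have "r * Poly_Mapping.single [] c = Poly_Mapping.single [] c * r" by (rule central[symmetric])
      thus ?thesis by (simp only: mult.assoc[symmetric])
    qed
    thus "mul F2 a (smul F2 c x) = smul F2 c (mul F2 a x)" unfolding x a' F_ops Ab_simps by (simp only:)
  next
    show "mul F2 a (zer F2) = zer F2" unfolding a' F_ops Ab_simps by simp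
  qed
qed

lemma lin_F2s: "lin F2 F2 (smul F2 c)"
  unfolding lin_def
proof (intro conjI ballI allI)
  fix x assume "x \<in> car F2" thus "smul F2 c x \<in> car F2" by (rule F_closed(7))
next
  fix x y assume "x \<in> car F2" "y \<in> car F2"
  then obtain p q where x: "x = Q p" and y: "y = Q q" using F2_Q by (meson exE)
  show "smul F2 c (add F2 x y) = add F2 (smul F2 c x) (smul F2 c y)" unfolding x y F_ops Ab_simps
    by (simp only: distrib_left)
next
  fix d x assume "x \<in> car F2"
  then obtain p where x: "x = Q p" using F2_Q by (meson exE)
  show "smul F2 c (smul F2 d x) = smul F2 d (smul F2 c x)" unfolding x F_ops Ab_simps by (simp only: s_comm)
next
  show "smul F2 c (zer F2) = zer F2" unfolding F_ops Ab_simps by simp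
qed

lemma lin_F2n: "lin F2 F2 (neg F2)"
  unfolding lin_def
proof (intro conjI ballI allI)
  fix x assume "x \<in> car F2" thus "neg F2 x \<in> car F2" by (rule F_closed(8))
next
  fix x y assume "x \<in> car F2" "y \<in> car F2"
  then obtain p q where x: "x = Q p" and y: "y = Q q" using F2_Q by (meson exE)
  show "neg F2 (add F2 x y) = add F2 (neg F2 x) (neg F2 y)" unfolding x y F_ops Ab_simps
    by (simp only: minus_add_distrib)
next
  fix d x assume "x \<in> car F2"
  then obtain p where x: "x = Q p" using F2_Q by (meson exE)
  show "neg F2 (smul F2 d x) = smul F2 d (neg F2 x)" unfolding x F_ops Ab_simps by (simp only: mult_minus_right)
next
  show "neg F2 (zer F2) = zer F2" unfolding F_ops Ab_simps by simp
qed

lemma F2_s0: "y \<in> car F2 \<Longrightarrow> smul F2 0 y = zer F2"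
proof -
  assume "y \<in> car F2"
  then obtain p where y: "y = Q p" using F2_sub Ab_car by blast
  show ?thesis unfolding y F_ops Ab_simps by simp
qed

lemma phi_ops: "x \<in> car F1 \<Longrightarrow> y \<in> car F1 \<Longrightarrow> phi (mul F1 x y) = mul F2 (phi x) (phi y)"
  "x \<in> car F1 \<Longrightarrow> phi (smul F1 c x) = smul F2 c (phi x)"
  "x \<in> car F1 \<Longrightarrow> phi (neg F1 x) = neg F2 (phi x)"
  "x \<in> car F1 \<Longrightarrow> y \<in> car F1 \<Longrightarrow> phi (add F1 x y) = add F2 (phi x) (phi y)"
proof -
  note Qi = F1_Q
  { fix x y assume "x \<in> car F1" "y \<in> car F1"
    then obtain p q where x: "x = Q p" and y: "y = Q q" using Qi by (meson exE)
    show "phi (mul F1 x y) = mul F2 (phi x) (phi y)" unfolding x y F_ops by (rule phi_mul)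
    show "phi (add F1 x y) = add F2 (phi x) (phi y)" unfolding x y F_ops by (rule phi_add) }
  { fix x assume "x \<in> car F1"
    then obtain p where x: "x = Q p" using Qi by (meson exE)
    show "phi (smul F1 c x) = smul F2 c (phi x)" unfolding x F_ops by (rule phi_smul)
    show "phi (neg F1 x) = neg F2 (phi x)" unfolding x F_ops Ab_simps phiQ by simp }
qed

end

lemma pm_defs: "trmul K t b = pmap (\<lambda>x. x) (\<lambda>x. mul K x b) t" "tlmul K a t = pmap (mul K a) (\<lambda>x. x) t"
  "tneg K t = pmap (neg K) (\<lambda>x. x) t" "tscal K c t = pmap (smul K c) (\<lambda>x. x) t" "tmap f t = pmap f f t"
  by (simp_all add: trmul_def tlmul_def tneg_def tscal_def tmap_def pmap_def)

context fzb begin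

definition "P x y \<longleftrightarrow> tens_eq F2 (br2 (phi x) (phi y)) (tmap phi (br1 x y))"

lemma br1_car: "x \<in> car F1 \<Longrightarrow> y \<in> car F1 \<Longrightarrow> set (br1 x y) \<subseteq> car F1 \<times> car F1"
  and br1_addr: "x \<in> car F1 \<Longrightarrow> y \<in> car F1 \<Longrightarrow> z \<in> car F1 \<Longrightarrow> tens_eq F1 (br1 x (add F1 y z)) (br1 x y @ br1 x z)"
  and br1_smulr: "x \<in> car F1 \<Longrightarrow> y \<in> car F1 \<Longrightarrow> tens_eq F1 (br1 x (smul F1 c y)) (tscal F1 c (br1 x y))"
  and br1_anti: "x \<in> car F1 \<Longrightarrow> y \<in> car F1 \<Longrightarrow> tens_eq F1 (br1 x y) (tneg F1 (tswap (br1 y x)))"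
  and br1_leib: "x \<in> car F1 \<Longrightarrow> y \<in> car F1 \<Longrightarrow> z \<in> car F1 \<Longrightarrow> tens_eq F1 (br1 x (mul F1 y z)) (trmul F1 (br1 x y) z @ tlmul F1 y (br1 x z))"
  using DB1 unfolding dbl_bracket_def by blast+

lemma br2_car: "x \<in> car F2 \<Longrightarrow> y \<in> car F2 \<Longrightarrow> set (br2 x y) \<subseteq> car F2 \<times> car F2"
  and br2_addr: "x \<in> car F2 \<Longrightarrow> y \<in> car F2 \<Longrightarrow> z \<in> car F2 \<Longrightarrow> tens_eq F2 (br2 x (add F2 y z)) (br2 x y @ br2 x z)"
  and br2_smulr: "x \<in> car F2 \<Longrightarrow> y \<in> car F2 \<Longrightarrow> tens_eq F2 (br2 x (smul F2 c y)) (tscal F2 c (br2 x y))"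
  and br2_anti: "x \<in> car F2 \<Longrightarrow> y \<in> car F2 \<Longrightarrow> tens_eq F2 (br2 x y) (tneg F2 (tswap (br2 y x)))"
  and br2_leib: "x \<in> car F2 \<Longrightarrow> y \<in> car F2 \<Longrightarrow> z \<in> car F2 \<Longrightarrow> tens_eq F2 (br2 x (mul F2 y z)) (trmul F2 (br2 x y) z @ tlmul F2 y (br2 x z))"
  using DB2 unfolding dbl_bracket_def by blast+

lemma tphi_cong: "tens_eq F1 t u \<Longrightarrow> tens_eq F2 (tmap phi t) (tmap phi u)"
  unfolding pm_defs by (rule tens_transport[OF _ lin_phi lin_phi])

lemma P_add2: assumes c: "x \<in> car F1" "y \<in> car F1" "z \<in> car F1" and h: "P x y" "P x z"
  shows "P x (add F1 y z)"
proof -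
  have c2: "phi x \<in> car F2" "phi y \<in> car F2" "phi z \<in> car F2" using c phi_F12 by auto
  have "br2 (phi x) (phi (add F1 y z)) = br2 (phi x) (add F2 (phi y) (phi z))" using c by (simp add: phi_ops)
  also have "tens_eq F2 \<dots> (br2 (phi x) (phi y) @ br2 (phi x) (phi z))" by (rule br2_addr[OF c2])
  also have "tens_eq F2 \<dots> (tmap phi (br1 x y) @ tmap phi (br1 x z))" using h unfolding P_def by (rule tens_eq.app)
  also have "\<dots> = tmap phi (br1 x y @ br1 x z)" by (simp add: tmap_def)
  also have "tens_eq F2 \<dots> (tmap phi (br1 x (add F1 y z)))" by (rule tphi_cong[OF tens_eq.sym[OF br1_addr[OF c]]])
  finally show ?thesis unfolding P_def .
qed

lemma P_smul2: assumes c: "x \<in> car F1" "y \<in> car F1" and h: "P x y"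
  shows "P x (smul F1 c y)"
proof -
  have c2: "phi x \<in> car F2" "phi y \<in> car F2" using c phi_F12 by auto
  have "br2 (phi x) (phi (smul F1 c y)) = br2 (phi x) (smul F2 c (phi y))" using c by (simp add: phi_ops)
  also have "tens_eq F2 \<dots> (tscal F2 c (br2 (phi x) (phi y)))" by (rule br2_smulr[OF c2])
  also have "tens_eq F2 \<dots> (tscal F2 c (tmap phi (br1 x y)))"
    using h unfolding P_def pm_defs by (rule tens_transport[OF _ lin_F2s lin_id(2)])
  also have "\<dots> = tmap phi (tscal F1 c (br1 x y))" unfolding pm_defs pmap_comp
    by (rule pmap_cong) (use br1_car[OF c] in \<open>auto simp: phi_ops\<close>)
  also have "tens_eq F2 \<dots> (tmap phi (br1 x (smul F1 c y)))" by (rule tphi_cong[OF tens_eq.sym[OF br1_smulr[OF c]]])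
  finally show ?thesis unfolding P_def .
qed

lemma P_mul2: assumes c: "x \<in> car F1" "y \<in> car F1" "z \<in> car F1" and h: "P x y" "P x z"
  shows "P x (mul F1 y z)"
proof -
  have c2: "phi x \<in> car F2" "phi y \<in> car F2" "phi z \<in> car F2" using c phi_F12 by auto
  have "br2 (phi x) (phi (mul F1 y z)) = br2 (phi x) (mul F2 (phi y) (phi z))" using c by (simp add: phi_ops)
  also have "tens_eq F2 \<dots> (trmul F2 (br2 (phi x) (phi y)) (phi z) @ tlmul F2 (phi y) (br2 (phi x) (phi z)))"
    by (rule br2_leib[OF c2])
  also have "tens_eq F2 \<dots> (trmul F2 (tmap phi (br1 x y)) (phi z) @ tlmul F2 (phi y) (tmap phi (br1 x z)))"
  proof (rule tens_eq.app)
    show "tens_eq F2 (trmul F2 (br2 (phi x) (phi y)) (phi z)) (trmul F2 (tmap phi (br1 x y)) (phi z))"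
      using h(1) unfolding P_def pm_defs(1) by (rule tens_transport[OF _ lin_id(2) lin_F2r[OF c2(3)]])
    show "tens_eq F2 (tlmul F2 (phi y) (br2 (phi x) (phi z))) (tlmul F2 (phi y) (tmap phi (br1 x z)))"
      using h(2) unfolding P_def pm_defs(2) by (rule tens_transport[OF _ lin_F2l[OF c2(2)] lin_id(2)])
  qed
  also have "\<dots> = tmap phi (trmul F1 (br1 x y) z @ tlmul F1 y (br1 x z))"
  proof -
    have "trmul F2 (tmap phi (br1 x y)) (phi z) = tmap phi (trmul F1 (br1 x y) z)" unfolding pm_defs pmap_comp
      by (rule pmap_cong) (use br1_car[OF c(1,2)] c in \<open>auto simp: phi_ops\<close>)
    moreover have "tlmul F2 (phi y) (tmap phi (br1 x z)) = tmap phi (tlmul F1 y (br1 x z))" unfolding pm_defs pmap_comp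
      by (rule pmap_cong) (use br1_car[OF c(1,3)] c in \<open>auto simp: phi_ops\<close>)
    ultimately show ?thesis by (simp add: tmap_def)
  qed
  also have "tens_eq F2 \<dots> (tmap phi (br1 x (mul F1 y z)))" by (rule tphi_cong[OF tens_eq.sym[OF br1_leib[OF c]]])
  finally show ?thesis unfolding P_def .
qed

lemma P_anti: assumes c: "x \<in> car F1" "g \<in> car F1" and h: "P g x" shows "P x g"
proof -
  have c2: "phi x \<in> car F2" "phi g \<in> car F2" using c phi_F12 by auto
  have "tens_eq F2 (br2 (phi x) (phi g)) (tneg F2 (tswap (br2 (phi g) (phi x))))" by (rule br2_anti[OF c2])
  also have "tens_eq F2 \<dots> (tneg F2 (tswap (tmap phi (br1 g x))))"
    unfolding pm_defs(3) by (rule tens_transport[OF tswap_cong'[OF F2_s0 h[unfolded P_def]] lin_F2n lin_id(2)])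
  also have "\<dots> = tmap phi (tneg F1 (tswap (br1 g x)))"
    unfolding tswap_def pm_defs pmap_def
    using br1_car[OF c(2,1)] by (auto simp: phi_ops split: prod.splits)
  also have "tens_eq F2 \<dots> (tmap phi (br1 x g))" by (rule tphi_cong[OF tens_eq.sym[OF br1_anti[OF c]]])
  finally show ?thesis unfolding P_def .
qed

end

context fzb begin

abbreviation "S1 \<equiv> gen_subalg F1 Gen1"

lemma Gen1_car: "Gen1 \<subseteq> car F1" unfolding Gen1_def using g1_car by blast

lemma S1_car: "x \<in> S1 \<Longrightarrow> x \<in> car F1"
proof (induction rule: gen_subalg.induct)
  case (gen x) thus ?case using Gen1_car by blast
next
  case one thus ?case by (rule F_closed)
next
  case (add x y) thus ?case by (intro F_closed(1))
next
  case (mul x y) thus ?case by (intro F_closed(2))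
next
  case (smul x c) thus ?case by (intro F_closed(3))
qed

lemma blockc_d: "blockc s s (dA s)" unfolding blockc_def by (simp add: dA_car dA_mul)

lemma one_dec: "one F1 = add F1 (g1 B1 B1 (dA B1)) (g1 B3 B3 (dA B3))"
proof -
  have "eps1 * X (dA B1) * eps1 + eps1 * X (dA B3) * eps1 - (eps1 * DF B1 * eps1 + eps1 * DF B3 * eps1) \<in> J"
    by (intro eqv_add eqv_mul eqv_refl XdA)
  moreover have "eps1 * DF B1 * eps1 + eps1 * DF B3 * eps1 - eps1 \<in> J"
    by (simp add: rs2; blast intro: Jr)
  ultimately have "eps1 * X (dA B1) * eps1 + eps1 * X (dA B3) * eps1 - eps1 \<in> J" by (rule eqv_trans)
  from QeqI[OF eqv_sym[OF this]] show ?thesis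
    unfolding F_ops Ab_simps g1_def by (simp add: lf1_def Lf1_def Rf1_def)
qed

lemma P_one: assumes x: "x \<in> car F1" and h: "P x (g1 B1 B1 (dA B1))" "P x (g1 B3 B3 (dA B3))"
  shows "P x (one F1)"
  unfolding one_dec by (rule P_add2[OF x g1_car g1_car h])

lemma stepA: assumes g: "g \<in> Gen1" shows "y \<in> S1 \<Longrightarrow> P g y"
proof (induction rule: gen_subalg.induct)
  case (gen y)
  from g obtain s t a where g': "g = g1 s t a" "blockc s t a" unfolding Gen1_def by blast
  from gen obtain s' t' b where y': "y = g1 s' t' b" "blockc s' t' b" unfolding Gen1_def by blast
  show ?case unfolding P_def g' y' by (rule P_gen[OF g'(2) y'(2)])
next
  case one
  from g obtain s t a where g': "g = g1 s t a" "blockc s t a" unfolding Gen1_def by blast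
  show ?case unfolding g'
    by (rule P_one[OF g1_car]) (unfold P_def, (rule P_gen[OF g'(2) blockc_d])+)
next
  case (add x y)
  have "g \<in> car F1" using g Gen1_car by blast
  from P_add2[OF this S1_car[OF add.hyps(1)] S1_car[OF add.hyps(2)] add.IH] show ?case .
next
  case (mul x y)
  have "g \<in> car F1" using g Gen1_car by blast
  from P_mul2[OF this S1_car[OF mul.hyps(1)] S1_car[OF mul.hyps(2)] mul.IH] show ?case .
next
  case (smul x c)
  have "g \<in> car F1" using g Gen1_car by blast
  from P_smul2[OF this S1_car[OF smul.hyps(1)] smul.IH] show ?case .
qed

lemma stepC: assumes x: "x \<in> S1" shows "y \<in> S1 \<Longrightarrow> P x y"
proof (induction rule: gen_subalg.induct)
  case (gen y)
  have "y \<in> car F1" using gen Gen1_car by blast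
  from P_anti[OF S1_car[OF x] this stepA[OF gen x]] show ?case .
next
  case one
  have G: "g1 s s (dA s) \<in> Gen1" for s unfolding Gen1_def using blockc_d by blast
  show ?case
  proof (rule P_one[OF S1_car[OF x]])
    show "P x (g1 B1 B1 (dA B1))" by (rule P_anti[OF S1_car[OF x] g1_car stepA[OF G x]])
    show "P x (g1 B3 B3 (dA B3))" by (rule P_anti[OF S1_car[OF x] g1_car stepA[OF G x]])
  qed
next
  case (add y z) thus ?case using S1_car[OF x] S1_car by (intro P_add2) simp_all
next
  case (mul y z) thus ?case using S1_car[OF x] S1_car by (intro P_mul2) simp_all
next
  case (smul y c) thus ?case using S1_car[OF x] S1_car by (intro P_smul2) simp_all
qed

end

context fzb begin

lemma S_zer: "zer F1 \<in> S1"
proof -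
  have "smul F1 0 (one F1) \<in> S1" by (intro gen_subalg.smul gen_subalg.one)
  thus ?thesis unfolding F_ops Ab_simps by simp
qed

lemma S_J: "p \<in> J \<Longrightarrow> Q p \<in> S1"
proof -
  assume "p \<in> J"
  hence "Q p = Q 0" by (intro QeqI) simp
  thus ?thesis using S_zer by (simp add: F_ops Ab_simps)
qed

lemma S_eqv: "p' - p \<in> J \<Longrightarrow> Q p \<in> S1 \<Longrightarrow> Q p' \<in> S1"
  using QeqI by metis

lemma S_add: "Q p \<in> S1 \<Longrightarrow> Q q \<in> S1 \<Longrightarrow> Q (p + q) \<in> S1"
  using gen_subalg.add[of "Q p" F1 Gen1 "Q q"] by (simp add: F_ops Ab_simps)
lemma S_mul: "Q p \<in> S1 \<Longrightarrow> Q q \<in> S1 \<Longrightarrow> Q (p * q) \<in> S1"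
  using gen_subalg.mul[of "Q p" F1 Gen1 "Q q"] by (simp add: F_ops Ab_simps)
lemma S_smul: "Q p \<in> S1 \<Longrightarrow> Q (Poly_Mapping.single [] c * p) \<in> S1"
  using gen_subalg.smul[of "Q p" F1 Gen1 c] by (simp add: F_ops Ab_simps)

lemma S_sum: "finite K \<Longrightarrow> (\<And>u. u \<in> K \<Longrightarrow> Q (f u) \<in> S1) \<Longrightarrow> Q (\<Sum>u\<in>K. f u) \<in> S1"
proof (induction K rule: finite_induct)
  case empty thus ?case using S_zer by (simp add: F_ops Ab_simps)
next
  case (insert x K) thus ?case by (simp add: S_add)
qed

lemma S_gen: "blockc s t a \<Longrightarrow> g1 s t a \<in> S1"
  by (rule gen_subalg.gen) (auto simp: Gen1_def)

lemma split1: "eps1 * eps1 + E j i * E i j - 1 \<in> J"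
  by (simp add: rs; blast intro: Jr)

lemma split_word: "Lf1 l * G * W * Rf1 r - ((Lf1 l * G * Rf1 False) * (Lf1 False * W * Rf1 r) + (Lf1 l * G * Rf1 True) * (Lf1 True * W * Rf1 r)) \<in> J"
proof -
  have "(Lf1 l * G) * (eps1 * eps1 + E j i * E i j) * (W * Rf1 r) - (Lf1 l * G) * 1 * (W * Rf1 r) \<in> J"
    by (intro eqv_mul eqv_refl split1)
  hence "(Lf1 l * G) * 1 * (W * Rf1 r) - (Lf1 l * G) * (eps1 * eps1 + E j i * E i j) * (W * Rf1 r) \<in> J" by (rule eqv_sym)
  thus ?thesis by (simp add: Lf1_def Rf1_def algebra_simps)
qed

lemma DF_UNIV: "(\<Sum>s\<in>UNIV. DF s) = 1"
  by (simp add: UNIV_blk DF_def)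

lemma decomp4: "L * M * R = (\<Sum>s\<in>UNIV. \<Sum>t\<in>UNIV. L * DF s * M * DF t * R)"
proof -
  have "L * M * R = L * (\<Sum>s\<in>UNIV. DF s) * M * (\<Sum>t\<in>UNIV. DF t) * R" by (simp add: DF_UNIV)
  also have "\<dots> = (\<Sum>s\<in>UNIV. \<Sum>t\<in>UNIV. L * DF s * M * DF t * R)"
    by (simp add: sum_distrib_left sum_distrib_right mult.assoc) (rule sum.swap)
  finally show ?thesis .
qed

lemma corner_X_term: assumes a: "a \<in> car A" shows "Q (Lf1 l * DF s * X a * DF t * Rf1 r) \<in> S1"
proof (cases "l = lf1 s \<and> r = lf1 t")
  case True
  have "Lf1 l * X (pr s t a) * Rf1 r - Lf1 l * (DF s * X a * DF t) * Rf1 r \<in> J"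
    unfolding pr_def by (intro eqv_mul eqv_refl X_sand a)
  from eqv_sym[OF this] have "Lf1 l * DF s * X a * DF t * Rf1 r - Lf1 l * X (pr s t a) * Rf1 r \<in> J"
    by (simp add: mult.assoc)
  moreover have "Q (Lf1 l * X (pr s t a) * Rf1 r) \<in> S1"
    using S_gen[OF blockc_pr[OF a, of s t]] True by (simp add: g1_def)
  ultimately show ?thesis by (rule S_eqv)
next
  case False
  show ?thesis
  proof (cases "l = lf1 s")
    case False
    have "(Lf1 l * DF s) * (X a * DF t * Rf1 r) \<in> J" by (rule J_intros(5)[OF mis1[OF False]])
    hence "Lf1 l * DF s * X a * DF t * Rf1 r \<in> J" by (simp add: mult.assoc)
    thus ?thesis by (rule S_J)
  next
    case True
    with \<open>\<not> (l = lf1 s \<and> r = lf1 t)\<close> have rr: "r \<noteq> lf1 t" by blast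
    have "(Lf1 l * DF s * X a) * (DF t * Rf1 r) \<in> J" by (rule J_intros(4)[OF mis2[OF rr]])
    hence "Lf1 l * DF s * X a * DF t * Rf1 r \<in> J" by (simp add: mult.assoc)
    thus ?thesis by (rule S_J)
  qed
qed

lemma corner_X: "Q (Lf1 l * X a * Rf1 r) \<in> S1"
proof (cases "a \<in> car A")
  case False
  have "(Lf1 l * X a) * Rf1 r \<in> J" by (rule J_intros(5)[OF J_intros(4)[OF Rout_J[OF False]]])
  thus ?thesis by (rule S_J)
next
  case a: True
  have "Q (\<Sum>s\<in>UNIV. \<Sum>t\<in>UNIV. Lf1 l * DF s * X a * DF t * Rf1 r) \<in> S1"
    by (rule S_sum[OF finite_UNIV], rule S_sum[OF finite_UNIV], rule corner_X_term[OF a])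
  thus ?thesis by (simp only: decomp4[symmetric])
qed

lemma Eii_S: "Q (E i i) \<in> S1"
proof -
  have "eps1 * X (dA B1) * eps1 - eps1 * DF B1 * eps1 \<in> J" by (intro eqv_mul eqv_refl XdA)
  moreover have "eps1 * DF B1 * eps1 - E i i \<in> J" by (simp add: rs2; blast intro: Jr)
  ultimately have "E i i - eps1 * X (dA B1) * eps1 \<in> J" by (meson eqv_sym eqv_trans)
  moreover have "Q (eps1 * X (dA B1) * eps1) \<in> S1"
    using S_gen[OF blockc_d[of B1]] by (simp add: g1_def lf1_def Lf1_def Rf1_def)
  ultimately show ?thesis by (rule S_eqv)
qed

lemma E_corner: "p \<in> {i,j} \<Longrightarrow> q \<in> {i,j} \<Longrightarrow>
  Lf1 l * E p q * Rf1 r - (if l = (p = j) \<and> r = (q = j) then E i i else 0) \<in> J"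
  by (auto; cases l; cases r; simp add: rs2; blast intro: Jr)

lemma corner_E: "Q (Lf1 l * E p q * Rf1 r) \<in> S1"
proof (cases "p \<in> {i,j} \<and> q \<in> {i,j}")
  case False
  hence "Lf1 l * E p q * Rf1 r \<in> J" by (intro J_intros Eout_J) blast
  thus ?thesis by (rule S_J)
next
  case True
  have h: "Q (if l = (p = j) \<and> r = (q = j) then E i i else 0) \<in> S1"
    using Eii_S S_J[OF J_intros(6)] by simp
  show ?thesis by (rule S_eqv[OF _ h]) (use E_corner True in blast)
qed

lemma corner_g: "Q (Lf1 l * fgen g * Rf1 r) \<in> S1"
proof (cases g)
  case (Inl a) thus ?thesis using corner_X by (simp add: X_def)
next
  case (Inr pq) thus ?thesis using corner_E by (cases pq) (simp add: E_def)
qed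

lemma base_corner: "Lf1 l * 1 * Rf1 r - (if l then (if r then E i i else 0) else (if r then 0 else eps1)) \<in> J"
  by (cases l; cases r; simp add: rs2; blast intro: Jr)

lemma corner_word: "Q (Lf1 l * Poly_Mapping.single u 1 * Rf1 r) \<in> S1"
proof (induction u arbitrary: l r)
  case Nil
  have h: "Q (if l then (if r then E i i else 0) else (if r then 0 else eps1)) \<in> S1"
  proof -
    have "Q eps1 \<in> S1" using gen_subalg.one[of F1 Gen1] by (simp add: F_ops)
    thus ?thesis using Eii_S S_J[OF J_intros(6)] by simp
  qed
  have e: "Poly_Mapping.single [] (1::'k) = 1" by (simp add: nil0)
  show ?case unfolding e by (rule S_eqv[OF base_corner h])
next
  case (Cons g w)
  have sw: "Poly_Mapping.single (g # w) (1::'k) = fgen g * Poly_Mapping.single w 1"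
    by (simp add: fgen_def mult_single plus_list_def)
  have "Q ((Lf1 l * fgen g * Rf1 False) * (Lf1 False * Poly_Mapping.single w 1 * Rf1 r) +
          (Lf1 l * fgen g * Rf1 True) * (Lf1 True * Poly_Mapping.single w 1 * Rf1 r)) \<in> S1"
    by (intro S_add S_mul corner_g Cons.IH)
  from S_eqv[OF split_word this] show ?case by (simp add: sw mult.assoc)
qed

lemma gen_main: "Q (eps1 * p * eps1) \<in> S1"
proof -
  have "eps1 * p * eps1 = (\<Sum>u\<in>Poly_Mapping.keys p. Poly_Mapping.single [] (Poly_Mapping.lookup p u) *
            (Lf1 False * Poly_Mapping.single u 1 * Rf1 False))"
  proof -
    have "eps1 * p * eps1 = (\<Sum>u\<in>Poly_Mapping.keys p. eps1 * Poly_Mapping.single u (Poly_Mapping.lookup p u) * eps1)"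
      by (subst pm_expand[of p]) (simp add: sum_distrib_left sum_distrib_right)
    also have "\<dots> = (\<Sum>u\<in>Poly_Mapping.keys p. Poly_Mapping.single [] (Poly_Mapping.lookup p u) *
            (eps1 * Poly_Mapping.single u 1 * eps1))"
    proof (rule sum.cong[OF HOL.refl])
      fix u
      have "Poly_Mapping.single u (Poly_Mapping.lookup p u) = Poly_Mapping.single [] (Poly_Mapping.lookup p u) * Poly_Mapping.single u 1"
        by (simp add: mult_single plus_list_def)
      thus "eps1 * Poly_Mapping.single u (Poly_Mapping.lookup p u) * eps1 = Poly_Mapping.single [] (Poly_Mapping.lookup p u) * (eps1 * Poly_Mapping.single u 1 * eps1)"
        by (simp add: sc_central)
    qed
    finally show ?thesis by (simp add: Lf1_def Rf1_def)
  qed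
  moreover have "Q (\<Sum>u\<in>Poly_Mapping.keys p. Poly_Mapping.single [] (Poly_Mapping.lookup p u) *
            (Lf1 False * Poly_Mapping.single u 1 * Rf1 False)) \<in> S1"
    by (intro S_sum finite_keys S_smul corner_word)
  ultimately show ?thesis by simp
qed

lemma car_S1: "car F1 \<subseteq> S1"
  unfolding F_car using gen_main by blast

lemma P_all: "x \<in> car F1 \<Longrightarrow> y \<in> car F1 \<Longrightarrow> P x y"
  using stepC car_S1 by blast

end

theorem mainTheorem6:
  fixes A :: "('k::field_char_0, 'a) kalg"
    and e :: "'i \<Rightarrow> 'a" and I :: "'i list"
    and brA :: "'a \<Rightarrow> 'a \<Rightarrow> ('a \<times> 'a) list"
    and i1 i2 :: 'i
    and br1 br2 :: "('a, 'i, 'k) fbar set \<Rightarrow> ('a, 'i, 'k) fbar set \<Rightarrow>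
                    (('a, 'i, 'k) fbar set \<times> ('a, 'i, 'k) fbar set) list"
  assumes "B_algebra A e I" and "fin_gen A" and "dbl_bracket A e I brA"
    and "i1 \<in> set I" and "i2 \<in> set I" and "i1 \<noteq> i2"
    and "induced_bracket A e I i1 i2 brA br1"
    and "induced_bracket A e I i2 i1 brA br2"
  shows "\<exists>\<phi>. alg_iso (fusion A e i1 i2) (fusion A e i2 i1) \<phi> \<and>
           (\<forall>a\<in>car A. \<phi> (fpi A e i1 i2 a) = fpi A e i2 i1 a) \<and>
           (\<forall>x\<in>car (fusion A e i1 i2). \<forall>y\<in>car (fusion A e i1 i2).
              tens_eq (fusion A e i2 i1) (br2 (\<phi> x) (\<phi> y)) (tmap \<phi> (br1 x y)))"
proof -
  have KA: "is_kalg A" using assms(1) unfolding B_algebra_def by blast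
  interpret fzb A e I brA i1 i2 br1 br2
    by (unfold_locales) (use assms KA in auto)
  show ?thesis
  proof (intro exI conjI ballI)
    show "alg_iso (fusion A e i1 i2) (fusion A e i2 i1) phi" by (rule phi_iso)
    fix a assume "a \<in> car A" show "phi (fpi A e i1 i2 a) = fpi A e i2 i1 a" by (rule phi_fpi)
  next
    fix x y assume "x \<in> car (fusion A e i1 i2)" "y \<in> car (fusion A e i1 i2)"
    from P_all[OF this] show "tens_eq (fusion A e i2 i1) (br2 (phi x) (phi y)) (tmap phi (br1 x y))"
      unfolding P_def .
  qed
qed

end
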